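(* Let $X$ be a topological space and $\mathcal{F}:\mathfrak{Off}(X)^{op}\to\mathsf{Grp}$ a functor to small groupoids. If $\mathcal{F}$ satisfies the condition $\mathsf{sh}(2)$ (resp. $\mathsf{st}(2)$), then $\mathcal{F}$ satisfies the condition $\mathsf{sh}(n)$ (resp. $\mathsf{st}(n)$) for every $n\ge2$.
   Context: $\mathfrak{Off}(X)$ is the poset of open subsets of $X$; for $V\subseteq W$ write $x\mapsto x|_V$ for the functor $\mathcal{F}(W)\to\mathcal{F}(V)$; $U_{ij}=U_i\cap U_j$, $U_{ijk}=U_i\cap U_j\cap U_k$. For an integer $n\ge2$, $\mathcal{F}$ satisfies $\mathsf{sh}(n)$ if for every open $U$ and every open cover $U=U_1\cup\dots\cup U_n$, the natural functor from $\mathcal{F}(U)$ to the limit (equaliser) of the two functors $\prod_i\mathcal{F}(U_i)\rightrightarrows\prod_{i,j}\mathcal{F}(U_{ij})$ is an isomorphism of categories; this equaliser is the groupoid of families $(x_i\in\mathcal{F}(U_i))$ with $x_i|_{U_{ij}}=x_j|_{U_{ij}}$ and families of morphisms $f_i$ with $f_i|_{U_{ij}}=f_j|_{U_{ij}}$. $\mathcal{F}$ satisfies $\mathsf{st}(n)$ if for every such $U$ and cover, the natural functor from $\mathcal{F}(U)$ to the 2-limit of $\prod_i\mathcal{F}(U_i)\rightrightarrows\prod_{i,j}\mathcal{F}(U_{ij})\to\prod_{i,j,k}\mathcal{F}(U_{ijk})$ is an equivalence of categories; this 2-limit is the descent groupoid whose objects are $(x_i,\phi_{ij})$ with $x_i\in\mathcal{F}(U_i)$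 and isomorphisms $\phi_{ij}:x_i|_{U_{ij}}\to x_j|_{U_{ij}}$ in $\mathcal{F}(U_{ij})$ satisfying $\phi_{jk}|_{U_{ijk}}\circ\phi_{ij}|_{U_{ijk}}=\phi_{ik}|_{U_{ijk}}$, whose morphisms $(x_i,\phi_{ij})\to(y_i,\eta_{ij})$ are families $f_i:x_i\to y_i$ with $\eta_{ij}\circ f_i|_{U_{ij}}=f_j|_{U_{ij}}\circ\phi_{ij}$, and the natural functor sends $x$ to $(x|_{U_i},\mathrm{id})$. *)

theory Defs
  imports "HOL-Analysis.Analysis"
begin

text \<open>A (small) category: a set of objects, a set of arrows, domain, codomain,
  composition (Comp C g f = g o f, defined when Cod f = Dom g) and identities.\<close>

record ('o, 'm) cat =
  Obj  :: "'o set"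
  Arr  :: "'m set"
  Dom  :: "'m \<Rightarrow> 'o"
  Cod  :: "'m \<Rightarrow> 'o"
  Comp :: "'m \<Rightarrow> 'm \<Rightarrow> 'm"
  Ide  :: "'o \<Rightarrow> 'm"

definition is_category :: "('o, 'm, 'x) cat_scheme \<Rightarrow> bool" where
  "is_category C \<longleftrightarrow>
     (\<forall>f\<in>Arr C. Dom C f \<in> Obj C \<and> Cod C f \<in> Obj C) \<and>
     (\<forall>a\<in>Obj C. Ide C a \<in> Arr C \<and> Dom C (Ide C a) = a \<and> Cod C (Ide C a) = a) \<and>
     (\<forall>f\<in>Arr C. \<forall>g\<in>Arr C. Cod C f = Dom C g \<longrightarrow>
        Comp C g f \<in> Arr C \<and> Dom C (Comp C g f) = Dom C f \<and> Cod C (Comp C g f) = Cod C g) \<and>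
     (\<forall>f\<in>Arr C. Comp C (Ide C (Cod C f)) f = f \<and> Comp C f (Ide C (Dom C f)) = f) \<and>
     (\<forall>f\<in>Arr C. \<forall>g\<in>Arr C. \<forall>h\<in>Arr C. Cod C f = Dom C g \<longrightarrow> Cod C g = Dom C h \<longrightarrow>
        Comp C h (Comp C g f) = Comp C (Comp C h g) f)"

definition is_inverse :: "('o, 'm, 'x) cat_scheme \<Rightarrow> 'm \<Rightarrow> 'm \<Rightarrow> bool" where
  "is_inverse C f g \<longleftrightarrow> g \<in> Arr C \<and> Dom C g = Cod C f \<and> Cod C g = Dom C f \<and>
     Comp C g f = Ide C (Dom C f) \<and> Comp C f g = Ide C (Cod C f)"

definition is_groupoid :: "('o, 'm, 'x) cat_scheme \<Rightarrow> bool" where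
  "is_groupoid C \<longleftrightarrow> is_category C \<and> (\<forall>f\<in>Arr C. \<exists>g. is_inverse C f g)"

definition is_functor ::
  "('o, 'm, 'x) cat_scheme \<Rightarrow> ('p, 'n, 'y) cat_scheme \<Rightarrow> ('o \<Rightarrow> 'p) \<Rightarrow> ('m \<Rightarrow> 'n) \<Rightarrow> bool" where
  "is_functor C D Fo Fa \<longleftrightarrow>
     (\<forall>a\<in>Obj C. Fo a \<in> Obj D) \<and>
     (\<forall>f\<in>Arr C. Fa f \<in> Arr D \<and> Dom D (Fa f) = Fo (Dom C f) \<and> Cod D (Fa f) = Fo (Cod C f)) \<and>
     (\<forall>a\<in>Obj C. Fa (Ide C a) = Ide D (Fo a)) \<and>
     (\<forall>f\<in>Arr C. \<forall>g\<in>Arr C. Cod C f = Dom C g \<longrightarrow> Fa (Comp C g f) = Comp D (Fa g) (Fa f))"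

definition is_cat_iso ::
  "('o, 'm, 'x) cat_scheme \<Rightarrow> ('p, 'n, 'y) cat_scheme \<Rightarrow> ('o \<Rightarrow> 'p) \<Rightarrow> ('m \<Rightarrow> 'n) \<Rightarrow> bool" where
  "is_cat_iso C D Fo Fa \<longleftrightarrow> is_functor C D Fo Fa \<and>
     (\<exists>Go Ga. is_functor D C Go Ga \<and>
        (\<forall>a\<in>Obj C. Go (Fo a) = a) \<and> (\<forall>f\<in>Arr C. Ga (Fa f) = f) \<and>
        (\<forall>b\<in>Obj D. Fo (Go b) = b) \<and> (\<forall>g\<in>Arr D. Fa (Ga g) = g))"

definition is_nat_iso ::
  "('o, 'm, 'x) cat_scheme \<Rightarrow> ('p, 'n, 'y) cat_scheme \<Rightarrow> ('o \<Rightarrow> 'p) \<Rightarrow> ('m \<Rightarrow> 'n)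
     \<Rightarrow> ('o \<Rightarrow> 'p) \<Rightarrow> ('m \<Rightarrow> 'n) \<Rightarrow> ('o \<Rightarrow> 'n) \<Rightarrow> bool" where
  "is_nat_iso C D Fo Fa Go Ga eta \<longleftrightarrow>
     (\<forall>a\<in>Obj C. eta a \<in> Arr D \<and> Dom D (eta a) = Fo a \<and> Cod D (eta a) = Go a \<and>
                (\<exists>g. is_inverse D (eta a) g)) \<and>
     (\<forall>f\<in>Arr C. Comp D (eta (Cod C f)) (Fa f) = Comp D (Ga f) (eta (Dom C f)))"

definition is_cat_equiv ::
  "('o, 'm, 'x) cat_scheme \<Rightarrow> ('p, 'n, 'y) cat_scheme \<Rightarrow> ('o \<Rightarrow> 'p) \<Rightarrow> ('m \<Rightarrow> 'n) \<Rightarrow> bool" where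
  "is_cat_equiv C D Fo Fa \<longleftrightarrow> is_functor C D Fo Fa \<and>
     (\<exists>Go Ga eta eps. is_functor D C Go Ga \<and>
        is_nat_iso C C id id (Go \<circ> Fo) (Ga \<circ> Fa) eta \<and>
        is_nat_iso D D (Fo \<circ> Go) (Fa \<circ> Ga) id id eps)"

text \<open>A functor Off(X)^op \<rightarrow> Grp is given by: for every open U the groupoid FF U,
  and for open V \<subseteq> W the restriction functor F(W) \<rightarrow> F(V), with object part
  resO V W (x \<mapsto> x|_V) and arrow part resA V W.  Functoriality is strict.\<close>

definition grp_presheaf ::
  "'a topology \<Rightarrow> ('a set \<Rightarrow> ('o, 'm) cat) \<Rightarrow> ('a set \<Rightarrow> 'a set \<Rightarrow> 'o \<Rightarrow> 'o)
     \<Rightarrow> ('a set \<Rightarrow> 'a set \<Rightarrow> 'm \<Rightarrow> 'm) \<Rightarrow> bool" where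
  "grp_presheaf X FF resO resA \<longleftrightarrow>
     (\<forall>U. openin X U \<longrightarrow> is_groupoid (FF U)) \<and>
     (\<forall>V W. openin X V \<longrightarrow> openin X W \<longrightarrow> V \<subseteq> W \<longrightarrow>
        is_functor (FF W) (FF V) (resO V W) (resA V W)) \<and>
     (\<forall>W. openin X W \<longrightarrow> (\<forall>x\<in>Obj (FF W). resO W W x = x) \<and> (\<forall>f\<in>Arr (FF W). resA W W f = f)) \<and>
     (\<forall>V W Z. openin X V \<longrightarrow> openin X W \<longrightarrow> openin X Z \<longrightarrow> V \<subseteq> W \<longrightarrow> W \<subseteq> Z \<longrightarrow>
        (\<forall>x\<in>Obj (FF Z). resO V W (resO W Z x) = resO V Z x) \<and>
        (\<forall>f\<in>Arr (FF Z). resA V W (resA W Z f) = resA V Z f))"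

definition open_cover :: "'a topology \<Rightarrow> 'a set \<Rightarrow> nat \<Rightarrow> (nat \<Rightarrow> 'a set) \<Rightarrow> bool" where
  "open_cover X U n Us \<longleftrightarrow> openin X U \<and> (\<forall>i<n. openin X (Us i)) \<and> (\<Union>i<n. Us i) = U"

definition eq_cat ::
  "('a set \<Rightarrow> ('o, 'm) cat) \<Rightarrow> ('a set \<Rightarrow> 'a set \<Rightarrow> 'o \<Rightarrow> 'o) \<Rightarrow> ('a set \<Rightarrow> 'a set \<Rightarrow> 'm \<Rightarrow> 'm)
     \<Rightarrow> nat \<Rightarrow> (nat \<Rightarrow> 'a set) \<Rightarrow> (nat \<Rightarrow> 'o, nat \<Rightarrow> 'm) cat" where
  "eq_cat FF resO resA n Us =
     \<lparr> Obj = {x \<in> PiE {..<n} (\<lambda>i. Obj (FF (Us i))).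
               \<forall>i<n. \<forall>j<n. resO (Us i \<inter> Us j) (Us i) (x i) = resO (Us i \<inter> Us j) (Us j) (x j)},
       Arr = {f \<in> PiE {..<n} (\<lambda>i. Arr (FF (Us i))).
               \<forall>i<n. \<forall>j<n. resA (Us i \<inter> Us j) (Us i) (f i) = resA (Us i \<inter> Us j) (Us j) (f j)},
       Dom = (\<lambda>f. \<lambda>i\<in>{..<n}. Dom (FF (Us i)) (f i)),
       Cod = (\<lambda>f. \<lambda>i\<in>{..<n}. Cod (FF (Us i)) (f i)),
       Comp = (\<lambda>g f. \<lambda>i\<in>{..<n}. Comp (FF (Us i)) (g i) (f i)),
       Ide = (\<lambda>x. \<lambda>i\<in>{..<n}. Ide (FF (Us i)) (x i)) \<rparr>"

definition sh_cond ::
  "'a topology \<Rightarrow> ('a set \<Rightarrow> ('o, 'm) cat) \<Rightarrow> ('a set \<Rightarrow> 'a set \<Rightarrow> 'o \<Rightarrow> 'o)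
     \<Rightarrow> ('a set \<Rightarrow> 'a set \<Rightarrow> 'm \<Rightarrow> 'm) \<Rightarrow> nat \<Rightarrow> bool" where
  "sh_cond X FF resO resA n \<longleftrightarrow>
     (\<forall>U Us. open_cover X U n Us \<longrightarrow>
        is_cat_iso (FF U) (eq_cat FF resO resA n Us)
          (\<lambda>x. \<lambda>i\<in>{..<n}. resO (Us i) U x)
          (\<lambda>f. \<lambda>i\<in>{..<n}. resA (Us i) U f))"

text \<open>Arrows: triples
  (source, target, f) with f_i : x_i \<rightarrow> y_i compatible with the gluing data.\<close>

definition descent_objs ::
  "('a set \<Rightarrow> ('o, 'm) cat) \<Rightarrow> ('a set \<Rightarrow> 'a set \<Rightarrow> 'o \<Rightarrow> 'o) \<Rightarrow> ('a set \<Rightarrow> 'a set \<Rightarrow> 'm \<Rightarrow> 'm)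
     \<Rightarrow> nat \<Rightarrow> (nat \<Rightarrow> 'a set) \<Rightarrow> ((nat \<Rightarrow> 'o) \<times> (nat \<Rightarrow> nat \<Rightarrow> 'm)) set" where
  "descent_objs FF resO resA n Us =
     {(x, phi). x \<in> PiE {..<n} (\<lambda>i. Obj (FF (Us i))) \<and>
        phi \<in> PiE {..<n} (\<lambda>i. PiE {..<n} (\<lambda>j. Arr (FF (Us i \<inter> Us j)))) \<and>
        (\<forall>i<n. \<forall>j<n.
           Dom (FF (Us i \<inter> Us j)) (phi i j) = resO (Us i \<inter> Us j) (Us i) (x i) \<and>
           Cod (FF (Us i \<inter> Us j)) (phi i j) = resO (Us i \<inter> Us j) (Us j) (x j)) \<and>
        (\<forall>i<n. \<forall>j<n. \<forall>k<n.
           Comp (FF (Us i \<inter> Us j \<inter> Us k))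
             (resA (Us i \<inter> Us j \<inter> Us k) (Us j \<inter> Us k) (phi j k))
             (resA (Us i \<inter> Us j \<inter> Us k) (Us i \<inter> Us j) (phi i j))
           = resA (Us i \<inter> Us j \<inter> Us k) (Us i \<inter> Us k) (phi i k))}"

definition descent_cat ::
  "('a set \<Rightarrow> ('o, 'm) cat) \<Rightarrow> ('a set \<Rightarrow> 'a set \<Rightarrow> 'o \<Rightarrow> 'o) \<Rightarrow> ('a set \<Rightarrow> 'a set \<Rightarrow> 'm \<Rightarrow> 'm)
     \<Rightarrow> nat \<Rightarrow> (nat \<Rightarrow> 'a set)
     \<Rightarrow> ((nat \<Rightarrow> 'o) \<times> (nat \<Rightarrow> nat \<Rightarrow> 'm),
         ((nat \<Rightarrow> 'o) \<times> (nat \<Rightarrow> nat \<Rightarrow> 'm)) \<times> ((nat \<Rightarrow> 'o) \<times> (nat \<Rightarrow> nat \<Rightarrow> 'm)) \<times> (nat \<Rightarrow> 'm)) cat" where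
  "descent_cat FF resO resA n Us =
     \<lparr> Obj = descent_objs FF resO resA n Us,
       Arr = {(s, t, f). s \<in> descent_objs FF resO resA n Us \<and> t \<in> descent_objs FF resO resA n Us \<and>
               f \<in> PiE {..<n} (\<lambda>i. Arr (FF (Us i))) \<and>
               (\<forall>i<n. Dom (FF (Us i)) (f i) = fst s i \<and> Cod (FF (Us i)) (f i) = fst t i) \<and>
               (\<forall>i<n. \<forall>j<n.
                  Comp (FF (Us i \<inter> Us j)) (snd t i j) (resA (Us i \<inter> Us j) (Us i) (f i))
                  = Comp (FF (Us i \<inter> Us j)) (resA (Us i \<inter> Us j) (Us j) (f j)) (snd s i j))},
       Dom = (\<lambda>(s, t, f). s),
       Cod = (\<lambda>(s, t, f). t),
       Comp = (\<lambda>(s', t', g) (s, t, f). (s, t', \<lambda>i\<in>{..<n}. Comp (FF (Us i)) (g i) (f i))),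
       Ide = (\<lambda>s. (s, s, \<lambda>i\<in>{..<n}. Ide (FF (Us i)) (fst s i))) \<rparr>"

definition descent_functor_obj ::
  "('a set \<Rightarrow> ('o, 'm) cat) \<Rightarrow> ('a set \<Rightarrow> 'a set \<Rightarrow> 'o \<Rightarrow> 'o)
     \<Rightarrow> nat \<Rightarrow> 'a set \<Rightarrow> (nat \<Rightarrow> 'a set) \<Rightarrow> 'o \<Rightarrow> (nat \<Rightarrow> 'o) \<times> (nat \<Rightarrow> nat \<Rightarrow> 'm)" where
  "descent_functor_obj FF resO n U Us x =
     ((\<lambda>i\<in>{..<n}. resO (Us i) U x),
      (\<lambda>i\<in>{..<n}. \<lambda>j\<in>{..<n}.
         Ide (FF (Us i \<inter> Us j)) (resO (Us i \<inter> Us j) (Us i) (resO (Us i) U x))))"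

definition st_cond ::
  "'a topology \<Rightarrow> ('a set \<Rightarrow> ('o, 'm) cat) \<Rightarrow> ('a set \<Rightarrow> 'a set \<Rightarrow> 'o \<Rightarrow> 'o)
     \<Rightarrow> ('a set \<Rightarrow> 'a set \<Rightarrow> 'm \<Rightarrow> 'm) \<Rightarrow> nat \<Rightarrow> bool" where
  "st_cond X FF resO resA n \<longleftrightarrow>
     (\<forall>U Us. open_cover X U n Us \<longrightarrow>
        is_cat_equiv (FF U) (descent_cat FF resO resA n Us)
          (descent_functor_obj FF resO n U Us)
          (\<lambda>f. (descent_functor_obj FF resO n U Us (Dom (FF U) f),
                descent_functor_obj FF resO n U Us (Cod (FF U) f),
                (\<lambda>i\<in>{..<n}. resA (Us i) U f))))"

end

theory Submission
  imports Defs
begin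

lemma cat_dom[simp]: "is_category C \<Longrightarrow> f \<in> Arr C \<Longrightarrow> Dom C f \<in> Obj C"
  unfolding is_category_def by blast
lemma cat_cod[simp]: "is_category C \<Longrightarrow> f \<in> Arr C \<Longrightarrow> Cod C f \<in> Obj C"
  unfolding is_category_def by blast
lemma cat_ide[simp]: "is_category C \<Longrightarrow> a \<in> Obj C \<Longrightarrow> Ide C a \<in> Arr C"
  unfolding is_category_def by blast
lemma cat_dom_ide[simp]: "is_category C \<Longrightarrow> a \<in> Obj C \<Longrightarrow> Dom C (Ide C a) = a"
  unfolding is_category_def by blast
lemma cat_cod_ide[simp]: "is_category C \<Longrightarrow> a \<in> Obj C \<Longrightarrow> Cod C (Ide C a) = a"
  unfolding is_category_def by blast
lemma cat_comp[simp]: "is_category C \<Longrightarrow> f \<in> Arr C \<Longrightarrow> g \<in> Arr C \<Longrightarrow> Cod C f = Dom C g \<Longrightarrow> Comp C g f \<in> Arr C"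
  unfolding is_category_def by blast
lemma cat_dom_comp[simp]: "is_category C \<Longrightarrow> f \<in> Arr C \<Longrightarrow> g \<in> Arr C \<Longrightarrow> Cod C f = Dom C g \<Longrightarrow> Dom C (Comp C g f) = Dom C f"
  unfolding is_category_def by blast
lemma cat_cod_comp[simp]: "is_category C \<Longrightarrow> f \<in> Arr C \<Longrightarrow> g \<in> Arr C \<Longrightarrow> Cod C f = Dom C g \<Longrightarrow> Cod C (Comp C g f) = Cod C g"
  unfolding is_category_def by blast
lemma cat_idl[simp]: "is_category C \<Longrightarrow> f \<in> Arr C \<Longrightarrow> Cod C f = a \<Longrightarrow> Comp C (Ide C a) f = f"
  unfolding is_category_def by blast
lemma cat_idr[simp]: "is_category C \<Longrightarrow> f \<in> Arr C \<Longrightarrow> Dom C f = a \<Longrightarrow> Comp C f (Ide C a) = f"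
  unfolding is_category_def by blast
lemma cat_assoc: "is_category C \<Longrightarrow> f \<in> Arr C \<Longrightarrow> g \<in> Arr C \<Longrightarrow> h \<in> Arr C \<Longrightarrow> Cod C f = Dom C g \<Longrightarrow> Cod C g = Dom C h \<Longrightarrow>
   Comp C (Comp C h g) f = Comp C h (Comp C g f)"
  unfolding is_category_def by metis

lemma inv_arr: "is_inverse C f g \<Longrightarrow> g \<in> Arr C" and inv_dom: "is_inverse C f g \<Longrightarrow> Dom C g = Cod C f"
  and inv_cod: "is_inverse C f g \<Longrightarrow> Cod C g = Dom C f"
  and inv_l: "is_inverse C f g \<Longrightarrow> Comp C g f = Ide C (Dom C f)"
  and inv_r: "is_inverse C f g \<Longrightarrow> Comp C f g = Ide C (Cod C f)"
  unfolding is_inverse_def by auto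

lemma cancel_l: assumes "is_category C" "is_inverse C e e'" "e \<in> Arr C" "f \<in> Arr C" "Cod C f = Dom C e"
  shows "Comp C e' (Comp C e f) = f"
proof -
  have "Comp C e' (Comp C e f) = Comp C (Comp C e' e) f"
    using assms by (simp add: cat_assoc inv_arr inv_dom)
  also have "\<dots> = f" using assms by (simp add: inv_l)
  finally show ?thesis .
qed

lemma cancel_r: assumes "is_category C" "is_inverse C e e'" "e \<in> Arr C" "f \<in> Arr C" "Cod C f = Cod C e"
  shows "Comp C e (Comp C e' f) = f"
proof -
  have "Comp C e (Comp C e' f) = Comp C (Comp C e e') f"
    using assms by (simp add: cat_assoc inv_arr inv_dom inv_cod)
  also have "\<dots> = f" using assms by (simp add: inv_r)
  finally show ?thesis .
qed

lemma cancel_l2: assumes "is_category C" "is_inverse C e e'" "e \<in> Arr C" "f \<in> Arr C" "Dom C f = Cod C e"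
  shows "Comp C (Comp C f e) e' = f"
proof -
  have "Comp C (Comp C f e) e' = Comp C f (Comp C e e')"
    using assms by (simp add: cat_assoc inv_arr inv_dom inv_cod)
  also have "\<dots> = f" using assms by (simp add: inv_r)
  finally show ?thesis .
qed

lemma mono_iso: assumes "is_category C" "is_inverse C e e'" "e \<in> Arr C" "f \<in> Arr C" "f' \<in> Arr C"
  "Cod C f = Dom C e" "Cod C f' = Dom C e" "Comp C e f = Comp C e f'"
shows "f = f'"
  using cancel_l[OF assms(1-4,6)] cancel_l[OF assms(1-3,5,7)] assms(8) by metis

lemma epi_iso: assumes "is_category C" "is_inverse C e e'" "e \<in> Arr C" "f \<in> Arr C" "f' \<in> Arr C"
  "Dom C f = Cod C e" "Dom C f' = Cod C e" "Comp C f e = Comp C f' e"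
shows "f = f'"
  using cancel_l2[OF assms(1-4,6)] cancel_l2[OF assms(1-3,5,7)] assms(8) by metis

definition ginv where "ginv C f = (SOME g. is_inverse C f g)"

lemma ginv: "is_groupoid C \<Longrightarrow> f \<in> Arr C \<Longrightarrow> is_inverse C f (ginv C f)"
  unfolding is_groupoid_def ginv_def by (metis someI_ex)

lemma grp_cat: "is_groupoid C \<Longrightarrow> is_category C" unfolding is_groupoid_def by simp

lemma idem_ide: assumes "is_groupoid C" "f \<in> Arr C" "Dom C f = Cod C f" "Comp C f f = f"
  shows "f = Ide C (Dom C f)"
proof -
  have c: "is_category C" using grp_cat[OF assms(1)] .
  have i: "is_inverse C f (ginv C f)" using ginv[OF assms(1,2)] .
  have 1: "Comp C (ginv C f) (Comp C f f) = f" using cancel_l[OF c i assms(2) assms(2)] assms(3) by simp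
  have 2: "Comp C (ginv C f) f = Ide C (Dom C f)" using inv_l[OF i] .
  have 3: "Comp C (ginv C f) f = f" using 1 assms(4) by (simp only:)
  show ?thesis using 3 2 by (rule trans[OF sym])
qed


lemma fun_obj: "is_functor C D Fo Fa \<Longrightarrow> a \<in> Obj C \<Longrightarrow> Fo a \<in> Obj D"
  unfolding is_functor_def by blast
lemma fun_arr: "is_functor C D Fo Fa \<Longrightarrow> f \<in> Arr C \<Longrightarrow> Fa f \<in> Arr D"
  unfolding is_functor_def by blast
lemma fun_dom: "is_functor C D Fo Fa \<Longrightarrow> f \<in> Arr C \<Longrightarrow> Dom D (Fa f) = Fo (Dom C f)"
  unfolding is_functor_def by blast
lemma fun_cod: "is_functor C D Fo Fa \<Longrightarrow> f \<in> Arr C \<Longrightarrow> Cod D (Fa f) = Fo (Cod C f)"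
  unfolding is_functor_def by blast
lemma fun_ide: "is_functor C D Fo Fa \<Longrightarrow> a \<in> Obj C \<Longrightarrow> Fa (Ide C a) = Ide D (Fo a)"
  unfolding is_functor_def by blast
lemma fun_comp: "is_functor C D Fo Fa \<Longrightarrow> f \<in> Arr C \<Longrightarrow> g \<in> Arr C \<Longrightarrow> Cod C f = Dom C g \<Longrightarrow> Fa (Comp C g f) = Comp D (Fa g) (Fa f)"
  unfolding is_functor_def by blast

lemma iso_of_bij:
  assumes C: "is_category C" and F: "is_functor C D Fo Fa"
    and bo: "bij_betw Fo (Obj C) (Obj D)" and ba: "bij_betw Fa (Arr C) (Arr D)"
  shows "is_cat_iso C D Fo Fa"
proof -
  define Go where "Go = inv_into (Obj C) Fo"
  define Ga where "Ga = inv_into (Arr C) Fa"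
  have Go1: "b \<in> Obj D \<Longrightarrow> Go b \<in> Obj C" for b unfolding Go_def
    by (metis bij_betw_def bo inv_into_into)
  have Go2: "b \<in> Obj D \<Longrightarrow> Fo (Go b) = b" for b unfolding Go_def
    by (meson bij_betw_inv_into_right bo)
  have Go3: "a \<in> Obj C \<Longrightarrow> Go (Fo a) = a" for a unfolding Go_def
    by (meson bij_betw_inv_into_left bo)
  have Ga1: "g \<in> Arr D \<Longrightarrow> Ga g \<in> Arr C" for g unfolding Ga_def
    by (metis bij_betw_def ba inv_into_into)
  have Ga2: "g \<in> Arr D \<Longrightarrow> Fa (Ga g) = g" for g unfolding Ga_def
    by (meson bij_betw_inv_into_right ba)
  have Ga3: "f \<in> Arr C \<Longrightarrow> Ga (Fa f) = f" for f unfolding Ga_def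
    by (meson bij_betw_inv_into_left ba)
  have Gdom: "Dom C (Ga g) = Go (Dom D g)" if g: "g \<in> Arr D" for g
  proof -
    have "Dom D g = Fo (Dom C (Ga g))" using fun_dom[OF F Ga1[OF g]] Ga2[OF g] by simp
    thus ?thesis using Go3 C Ga1[OF g] by simp
  qed
  have Gcod: "Cod C (Ga g) = Go (Cod D g)" if g: "g \<in> Arr D" for g
  proof -
    have "Cod D g = Fo (Cod C (Ga g))" using fun_cod[OF F Ga1[OF g]] Ga2[OF g] by simp
    thus ?thesis using Go3 C Ga1[OF g] by simp
  qed
  have Gi: "Ga (Ide D b) = Ide C (Go b)" if b: "b \<in> Obj D" for b
  proof -
    have "Fa (Ide C (Go b)) = Ide D b" using fun_ide[OF F Go1[OF b]] Go2[OF b] by simp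
    hence "Ga (Ide D b) = Ga (Fa (Ide C (Go b)))" by simp
    thus "Ga (Ide D b) = Ide C (Go b)" using Ga3 C Go1[OF b] by simp
  qed
  have Gc: "Ga (Comp D h g) = Comp C (Ga h) (Ga g)" if g: "g \<in> Arr D" and h: "h \<in> Arr D" and gh: "Cod D g = Dom D h" for g h
  proof -
    have m: "Cod C (Ga g) = Dom C (Ga h)" using Gcod[OF g] Gdom[OF h] gh by simp
    have "Fa (Comp C (Ga h) (Ga g)) = Comp D h g"
      using fun_comp[OF F Ga1[OF g] Ga1[OF h] m] Ga2[OF g] Ga2[OF h] by simp
    hence "Ga (Comp D h g) = Ga (Fa (Comp C (Ga h) (Ga g)))" by simp
    thus "Ga (Comp D h g) = Comp C (Ga h) (Ga g)" using Ga3 cat_comp[OF C Ga1[OF g] Ga1[OF h] m] by simp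
  qed
  have "is_functor D C Go Ga"
    unfolding is_functor_def using Go1 Ga1 Gdom Gcod Gi Gc by blast
  thus ?thesis unfolding is_cat_iso_def using F Go3 Ga3 Go2 Ga2 by blast
qed

definition faithful :: "('o, 'm, 'x) cat_scheme \<Rightarrow> ('m \<Rightarrow> 'n) \<Rightarrow> bool" where
  "faithful C Fa \<longleftrightarrow> (\<forall>f\<in>Arr C. \<forall>f'\<in>Arr C. Dom C f = Dom C f' \<longrightarrow> Cod C f = Cod C f' \<longrightarrow> Fa f = Fa f' \<longrightarrow> f = f')"

definition full :: "('o, 'm, 'x) cat_scheme \<Rightarrow> ('p, 'n, 'y) cat_scheme \<Rightarrow> ('o \<Rightarrow> 'p) \<Rightarrow> ('m \<Rightarrow> 'n) \<Rightarrow> bool" where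
  "full C D Fo Fa \<longleftrightarrow> (\<forall>a\<in>Obj C. \<forall>a'\<in>Obj C. \<forall>g\<in>Arr D. Dom D g = Fo a \<longrightarrow> Cod D g = Fo a' \<longrightarrow>
      (\<exists>f\<in>Arr C. Dom C f = a \<and> Cod C f = a' \<and> Fa f = g))"

definition esurj :: "('o, 'm, 'x) cat_scheme \<Rightarrow> ('p, 'n, 'y) cat_scheme \<Rightarrow> ('o \<Rightarrow> 'p) \<Rightarrow> bool" where
  "esurj C D Fo \<longleftrightarrow> (\<forall>b\<in>Obj D. \<exists>a\<in>Obj C. \<exists>e\<in>Arr D. Dom D e = Fo a \<and> Cod D e = b)"

lemma faithfulD: "faithful C Fa \<Longrightarrow> f \<in> Arr C \<Longrightarrow> f' \<in> Arr C \<Longrightarrow> Dom C f = Dom C f' \<Longrightarrow> Cod C f = Cod C f' \<Longrightarrow> Fa f = Fa f' \<Longrightarrow> f = f'"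
  unfolding faithful_def by blast

lemma equiv_props:
  assumes C: "is_category C" and D: "is_category D" and E: "is_cat_equiv C D Fo Fa"
  shows "faithful C Fa \<and> full C D Fo Fa \<and> esurj C D Fo"
proof -
  obtain Go Ga eta eps where F: "is_functor C D Fo Fa" and G: "is_functor D C Go Ga"
    and et: "is_nat_iso C C id id (Go \<circ> Fo) (Ga \<circ> Fa) eta"
    and ep: "is_nat_iso D D (Fo \<circ> Go) (Fa \<circ> Ga) id id eps"
    using E unfolding is_cat_equiv_def by blast
  have et1: "a \<in> Obj C \<Longrightarrow> eta a \<in> Arr C \<and> Dom C (eta a) = a \<and> Cod C (eta a) = Go (Fo a) \<and> (\<exists>g. is_inverse C (eta a) g)" for a
    using et unfolding is_nat_iso_def by simp
  have et2: "f \<in> Arr C \<Longrightarrow> Comp C (eta (Cod C f)) f = Comp C (Ga (Fa f)) (eta (Dom C f))" for f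
    using et unfolding is_nat_iso_def by simp
  have ep1: "b \<in> Obj D \<Longrightarrow> eps b \<in> Arr D \<and> Dom D (eps b) = Fo (Go b) \<and> Cod D (eps b) = b \<and> (\<exists>g. is_inverse D (eps b) g)" for b
    using ep unfolding is_nat_iso_def by simp
  have ep2: "g \<in> Arr D \<Longrightarrow> Comp D (eps (Cod D g)) (Fa (Ga g)) = Comp D g (eps (Dom D g))" for g
    using ep unfolding is_nat_iso_def by simp
  have fF: "faithful C Fa" unfolding faithful_def
  proof (intro ballI impI)
    fix f f' assume f: "f \<in> Arr C" and f': "f' \<in> Arr C" and d: "Dom C f = Dom C f'" and c: "Cod C f = Cod C f'"
      and e: "Fa f = Fa f'"
    have a': "Cod C f \<in> Obj C" using C f by simp
    obtain i where i: "is_inverse C (eta (Cod C f)) i" using et1[OF a'] by blast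
    have ea: "eta (Cod C f) \<in> Arr C" "Dom C (eta (Cod C f)) = Cod C f" using et1[OF a'] by auto
    have eq: "Comp C (eta (Cod C f)) f = Comp C (eta (Cod C f)) f'"
      using et2[OF f] et2[OF f'] d c e by metis
    show "f = f'" by (rule mono_iso[OF C i ea(1) f f' _ _ eq]) (simp_all add: ea c[symmetric])
  qed
  have fG: "faithful D Ga" unfolding faithful_def
  proof (intro ballI impI)
    fix f f' assume f: "f \<in> Arr D" and f': "f' \<in> Arr D" and d: "Dom D f = Dom D f'" and c: "Cod D f = Cod D f'"
      and e: "Ga f = Ga f'"
    have a': "Dom D f \<in> Obj D" using D f by simp
    obtain i where i: "is_inverse D (eps (Dom D f)) i" using ep1[OF a'] by blast
    have ea: "eps (Dom D f) \<in> Arr D" "Cod D (eps (Dom D f)) = Dom D f" using ep1[OF a'] by auto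
    have eq: "Comp D f (eps (Dom D f)) = Comp D f' (eps (Dom D f))"
      using ep2[OF f] ep2[OF f'] d c e by metis
    show "f = f'" by (rule epi_iso[OF D i ea(1) f f' _ _ eq]) (simp_all add: ea d[symmetric])
  qed
  have fu: "full C D Fo Fa" unfolding full_def
  proof (intro ballI impI)
    fix a a' g assume a: "a \<in> Obj C" and a': "a' \<in> Obj C" and g: "g \<in> Arr D"
      and gd: "Dom D g = Fo a" and gc: "Cod D g = Fo a'"
    obtain i where i: "is_inverse C (eta a') i" using et1[OF a'] by blast
    have Gg: "Ga g \<in> Arr C" "Dom C (Ga g) = Go (Fo a)" "Cod C (Ga g) = Go (Fo a')"
      using fun_arr[OF G g] fun_dom[OF G g] fun_cod[OF G g] gd gc by auto
    have ea: "eta a \<in> Arr C" "Dom C (eta a) = a" "Cod C (eta a) = Go (Fo a)" using et1[OF a] by auto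
    have ea': "eta a' \<in> Arr C" "Dom C (eta a') = a'" "Cod C (eta a') = Go (Fo a')" using et1[OF a'] by auto
    have ii: "i \<in> Arr C" "Dom C i = Go (Fo a')" "Cod C i = a'"
      using inv_arr[OF i] inv_dom[OF i] inv_cod[OF i] ea' by auto
    define k where "k = Comp C (Ga g) (eta a)"
    have k: "k \<in> Arr C" "Dom C k = a" "Cod C k = Go (Fo a')" unfolding k_def using C Gg ea by auto
    define f where "f = Comp C i k"
    have ff: "f \<in> Arr C" "Dom C f = a" "Cod C f = a'" unfolding f_def using C k ii by auto
    have "Comp C (Ga (Fa f)) (eta a) = Comp C (eta a') f" using et2[OF ff(1)] ff by simp
    also have "\<dots> = k" unfolding f_def using cancel_r[OF C i ea'(1) k(1)] k ea' by simp
    finally have 1: "Comp C (Ga (Fa f)) (eta a) = Comp C (Ga g) (eta a)" unfolding k_def .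
    have Ff: "Fa f \<in> Arr D" "Dom D (Fa f) = Fo a" "Cod D (Fa f) = Fo a'"
      using fun_arr[OF F ff(1)] fun_dom[OF F ff(1)] fun_cod[OF F ff(1)] ff by auto
    have GFf: "Ga (Fa f) \<in> Arr C" "Dom C (Ga (Fa f)) = Go (Fo a)"
      using fun_arr[OF G Ff(1)] fun_dom[OF G Ff(1)] Ff by auto
    obtain j where j: "is_inverse C (eta a) j" using et1[OF a] by blast
    have 2: "Ga (Fa f) = Ga g" using epi_iso[OF C j ea(1) GFf(1) Gg(1)] GFf Gg ea 1 by simp
    have "Fa f = g" by (rule faithfulD[OF fG Ff(1) g _ _ 2]) (simp_all add: Ff gd gc)
    thus "\<exists>f\<in>Arr C. Dom C f = a \<and> Cod C f = a' \<and> Fa f = g" using ff by blast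
  qed
  have es: "esurj C D Fo" unfolding esurj_def
  proof
    fix b assume b: "b \<in> Obj D"
    show "\<exists>a\<in>Obj C. \<exists>e\<in>Arr D. Dom D e = Fo a \<and> Cod D e = b"
      using fun_obj[OF G b] ep1[OF b] by blast
  qed
  show ?thesis using fF fu es by blast
qed

lemma props_equiv:
  assumes C: "is_groupoid C" and D: "is_groupoid D" and F: "is_functor C D Fo Fa"
    and fF: "faithful C Fa" and fu: "full C D Fo Fa" and es: "esurj C D Fo"
  shows "is_cat_equiv C D Fo Fa"
proof -
  have Cc: "is_category C" and Dc: "is_category D" using C D grp_cat by auto
  define Go where "Go b = (SOME a. a \<in> Obj C \<and> (\<exists>e\<in>Arr D. Dom D e = Fo a \<and> Cod D e = b))" for b
  define E where "E b = (SOME e. e \<in> Arr D \<and> Dom D e = Fo (Go b) \<and> Cod D e = b)" for b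
  define Ei where "Ei b = ginv D (E b)" for b
  have Go1: "Go b \<in> Obj C \<and> (\<exists>e\<in>Arr D. Dom D e = Fo (Go b) \<and> Cod D e = b)" if b: "b \<in> Obj D" for b
  proof -
    have "\<exists>a. a \<in> Obj C \<and> (\<exists>e\<in>Arr D. Dom D e = Fo a \<and> Cod D e = b)" using es b unfolding esurj_def by blast
    thus ?thesis unfolding Go_def by (rule someI_ex)
  qed
  have E1: "E b \<in> Arr D \<and> Dom D (E b) = Fo (Go b) \<and> Cod D (E b) = b" if b: "b \<in> Obj D" for b
  proof -
    have "\<exists>e. e \<in> Arr D \<and> Dom D e = Fo (Go b) \<and> Cod D e = b" using Go1[OF b] by blast
    thus ?thesis unfolding E_def by (rule someI_ex)
  qed
  have Ei1: "is_inverse D (E b) (Ei b)" if b: "b \<in> Obj D" for b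
    unfolding Ei_def using ginv[OF D] E1[OF b] by blast
  have Ei2: "Ei b \<in> Arr D" "Dom D (Ei b) = b" "Cod D (Ei b) = Fo (Go b)" if b: "b \<in> Obj D" for b
    using inv_arr[OF Ei1[OF b]] inv_dom[OF Ei1[OF b]] inv_cod[OF Ei1[OF b]] E1[OF b] by auto
  define T where "T g = Comp D (Ei (Cod D g)) (Comp D g (E (Dom D g)))" for g
  have T1: "T g \<in> Arr D" "Dom D (T g) = Fo (Go (Dom D g))" "Cod D (T g) = Fo (Go (Cod D g))"
    if g: "g \<in> Arr D" for g
  proof -
    have d: "Dom D g \<in> Obj D" and c: "Cod D g \<in> Obj D" using Dc g by auto
    show "T g \<in> Arr D" "Dom D (T g) = Fo (Go (Dom D g))" "Cod D (T g) = Fo (Go (Cod D g))"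
      unfolding T_def using Dc g E1[OF d] Ei2[OF c] by auto
  qed
  define Ga where "Ga g = (SOME f. f \<in> Arr C \<and> Dom C f = Go (Dom D g) \<and> Cod C f = Go (Cod D g) \<and> Fa f = T g)" for g
  have Ga1: "Ga g \<in> Arr C \<and> Dom C (Ga g) = Go (Dom D g) \<and> Cod C (Ga g) = Go (Cod D g) \<and> Fa (Ga g) = T g"
    if g: "g \<in> Arr D" for g
  proof -
    have d: "Dom D g \<in> Obj D" and c: "Cod D g \<in> Obj D" using Dc g by auto
    have "\<exists>f. f \<in> Arr C \<and> Dom C f = Go (Dom D g) \<and> Cod C f = Go (Cod D g) \<and> Fa f = T g"
      using fu Go1[OF d] Go1[OF c] T1[OF g] unfolding full_def by blast
    thus ?thesis unfolding Ga_def by (rule someI_ex)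
  qed
  note uniq = faithfulD[OF fF]
  have ET: "Comp D (E (Cod D g)) (T g) = Comp D g (E (Dom D g))" if g: "g \<in> Arr D" for g
  proof -
    have d: "Dom D g \<in> Obj D" and c: "Cod D g \<in> Obj D" using Dc g by auto
    have ge: "Comp D g (E (Dom D g)) \<in> Arr D" "Cod D (Comp D g (E (Dom D g))) = Cod D g" using Dc g E1[OF d] by auto
    show ?thesis unfolding T_def using cancel_r[OF Dc Ei1[OF c] _ ge(1)] E1[OF c] ge by simp
  qed
  have Gi: "Ga (Ide D b) = Ide C (Go b)" if b: "b \<in> Obj D" for b
  proof -
    have i: "Ide D b \<in> Arr D" using Dc b by simp
    have g: "Ga (Ide D b) \<in> Arr C" "Dom C (Ga (Ide D b)) = Go b" "Cod C (Ga (Ide D b)) = Go b"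
      "Fa (Ga (Ide D b)) = T (Ide D b)" using Ga1[OF i] Dc b by auto
    have "T (Ide D b) = Comp D (Ei b) (E b)" unfolding T_def using Dc b E1[OF b] by simp
    also have "\<dots> = Ide D (Fo (Go b))" using inv_l[OF Ei1[OF b]] E1[OF b] by simp
    also have "\<dots> = Fa (Ide C (Go b))" using fun_ide[OF F] Go1[OF b] by simp
    finally have eq: "Fa (Ga (Ide D b)) = Fa (Ide C (Go b))" using g(4) by simp
    show "Ga (Ide D b) = Ide C (Go b)" by (rule uniq[OF g(1) _ _ _ eq]) (simp_all add: g Cc Go1[OF b])
  qed
  have Gc: "Ga (Comp D h g) = Comp C (Ga h) (Ga g)" if g: "g \<in> Arr D" and h: "h \<in> Arr D" and gh: "Cod D g = Dom D h" for g h
  proof -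
    have hg: "Comp D h g \<in> Arr D" "Dom D (Comp D h g) = Dom D g" "Cod D (Comp D h g) = Cod D h" using Dc g h gh by auto
    have A: "Ga (Comp D h g) \<in> Arr C" "Dom C (Ga (Comp D h g)) = Go (Dom D g)" "Cod C (Ga (Comp D h g)) = Go (Cod D h)"
      "Fa (Ga (Comp D h g)) = T (Comp D h g)" using Ga1[OF hg(1)] hg by auto
    have m: "Cod C (Ga g) = Dom C (Ga h)" using Ga1[OF g] Ga1[OF h] gh by simp
    have B: "Comp C (Ga h) (Ga g) \<in> Arr C" "Dom C (Comp C (Ga h) (Ga g)) = Go (Dom D g)"
      "Cod C (Comp C (Ga h) (Ga g)) = Go (Cod D h)" using Cc Ga1[OF g] Ga1[OF h] m by auto
    have d: "Dom D g \<in> Obj D" and c: "Cod D g \<in> Obj D" and c2: "Cod D h \<in> Obj D" using Dc g h by auto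
    have e1: "E (Dom D g) \<in> Arr D" "Cod D (E (Dom D g)) = Dom D g" using E1[OF d] by auto
    have e2: "E (Cod D g) \<in> Arr D" "Cod D (E (Cod D g)) = Cod D g" using E1[OF c] by auto
    have i2: "Ei (Cod D g) \<in> Arr D" "Dom D (Ei (Cod D g)) = Cod D g" using Ei2[OF c] by auto
    have i3: "Ei (Cod D h) \<in> Arr D" "Dom D (Ei (Cod D h)) = Cod D h" using Ei2[OF c2] by auto
    have ge: "Comp D g (E (Dom D g)) \<in> Arr D" "Cod D (Comp D g (E (Dom D g))) = Cod D g" using Dc g e1 by auto
    have Th: "T h \<in> Arr D" "Dom D (T h) = Fo (Go (Dom D h))" "Cod D (T h) = Fo (Go (Cod D h))" using T1[OF h] by auto
    have Tg: "T g \<in> Arr D" "Dom D (T g) = Fo (Go (Dom D g))" "Cod D (T g) = Fo (Go (Cod D g))" using T1[OF g] by auto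
    have Thg: "T (Comp D h g) \<in> Arr D" "Dom D (T (Comp D h g)) = Fo (Go (Dom D g))" "Cod D (T (Comp D h g)) = Fo (Go (Cod D h))" using T1[OF hg(1)] hg by auto
    have e3: "E (Cod D h) \<in> Arr D" "Dom D (E (Cod D h)) = Fo (Go (Cod D h))" "Cod D (E (Cod D h)) = Cod D h" using E1[OF c2] by auto
    have e2': "Dom D (E (Cod D g)) = Fo (Go (Cod D g))" using E1[OF c] by auto
    have e1': "Dom D (E (Dom D g)) = Fo (Go (Dom D g))" using E1[OF d] by auto
    have 1: "Fa (Comp C (Ga h) (Ga g)) = Comp D (T h) (T g)" using fun_comp[OF F _ _ m] Ga1[OF g] Ga1[OF h] by simp
    have "Comp D (E (Cod D h)) (Comp D (T h) (T g)) = Comp D (Comp D (E (Cod D h)) (T h)) (T g)"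
      using Th Tg e3 gh Dc by (simp add: cat_assoc)
    also have "\<dots> = Comp D (Comp D h (E (Cod D g))) (T g)" using ET[OF h] gh by simp
    also have "\<dots> = Comp D h (Comp D (E (Cod D g)) (T g))" using Dc h e2 e2' Tg gh by (simp add: cat_assoc)
    also have "\<dots> = Comp D h (Comp D g (E (Dom D g)))" using ET[OF g] by simp
    also have "\<dots> = Comp D (Comp D h g) (E (Dom D g))" using Dc h g e1 gh by (simp add: cat_assoc)
    also have "\<dots> = Comp D (E (Cod D h)) (T (Comp D h g))" using ET[OF hg(1)] hg by simp
    finally have 2: "Comp D (E (Cod D h)) (Comp D (T h) (T g)) = Comp D (E (Cod D h)) (T (Comp D h g))" .
    have 3: "Comp D (T h) (T g) = T (Comp D h g)"
      by (rule mono_iso[OF Dc Ei1[OF c2] e3(1) _ Thg(1) _ _ 2]) (use Dc Th Tg gh e3 Thg in auto)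
    have eq: "Fa (Ga (Comp D h g)) = Fa (Comp C (Ga h) (Ga g))" using A(4) 1 3 by simp
    show "Ga (Comp D h g) = Comp C (Ga h) (Ga g)" by (rule uniq[OF A(1) B(1) _ _ eq]) (simp_all add: A B)
  qed
  have G: "is_functor D C Go Ga" unfolding is_functor_def using Go1 Ga1 Gi Gc by blast
  define eta where "eta a = (SOME f. f \<in> Arr C \<and> Dom C f = a \<and> Cod C f = Go (Fo a) \<and> Fa f = Ei (Fo a))" for a
  have eta1: "eta a \<in> Arr C \<and> Dom C (eta a) = a \<and> Cod C (eta a) = Go (Fo a) \<and> Fa (eta a) = Ei (Fo a)"
    if a: "a \<in> Obj C" for a
  proof -
    have b: "Fo a \<in> Obj D" using fun_obj[OF F a] .
    have "\<exists>f. f \<in> Arr C \<and> Dom C f = a \<and> Cod C f = Go (Fo a) \<and> Fa f = Ei (Fo a)"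
      using fu a Go1[OF b] Ei2[OF b] unfolding full_def by blast
    thus ?thesis unfolding eta_def by (rule someI_ex)
  qed
  have et_a: "eta a \<in> Arr C \<and> Dom C (eta a) = id a \<and> Cod C (eta a) = (Go \<circ> Fo) a \<and> (\<exists>g. is_inverse C (eta a) g)"
    if a: "a \<in> Obj C" for a
      using eta1[OF a] ginv[OF C] by auto
  have et_n: "Comp C (eta (Cod C (f))) (id f) = Comp C ((Ga \<circ> Fa) f) (eta (Dom C f))" if f: "f \<in> Arr C" for f
  proof -
    have a: "Dom C f \<in> Obj C" and a': "Cod C f \<in> Obj C" using Cc f by auto
    have Ff: "Fa f \<in> Arr D" "Dom D (Fa f) = Fo (Dom C f)" "Cod D (Fa f) = Fo (Cod C f)" using F f fun_arr fun_dom fun_cod by metis+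
    have L: "Comp C (eta (Cod C f)) f \<in> Arr C" "Dom C (Comp C (eta (Cod C f)) f) = Dom C f"
      "Cod C (Comp C (eta (Cod C f)) f) = Go (Fo (Cod C f))"
      using Cc f eta1[OF a'] by auto
    have R: "Comp C (Ga (Fa f)) (eta (Dom C f)) \<in> Arr C" "Dom C (Comp C (Ga (Fa f)) (eta (Dom C f))) = Dom C f"
      "Cod C (Comp C (Ga (Fa f)) (eta (Dom C f))) = Go (Fo (Cod C f))"
      using Cc f eta1[OF a] Ga1[OF Ff(1)] Ff by auto
    have b: "Fo (Dom C f) \<in> Obj D" and b': "Fo (Cod C f) \<in> Obj D" using fun_obj[OF F] a a' by auto
    have TF: "T (Fa f) \<in> Arr D" "Dom D (T (Fa f)) = Fo (Go (Fo (Dom C f)))" "Cod D (T (Fa f)) = Fo (Go (Fo (Cod C f)))"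
      using T1[OF Ff(1)] Ff by auto
    have eb: "E (Fo (Dom C f)) \<in> Arr D" "Dom D (E (Fo (Dom C f))) = Fo (Go (Fo (Dom C f)))" "Cod D (E (Fo (Dom C f))) = Fo (Dom C f)"
      using E1[OF b] by auto
    have eb': "E (Fo (Cod C f)) \<in> Arr D" "Dom D (E (Fo (Cod C f))) = Fo (Go (Fo (Cod C f)))" "Cod D (E (Fo (Cod C f))) = Fo (Cod C f)"
      using E1[OF b'] by auto
    have ib: "Ei (Fo (Dom C f)) \<in> Arr D" "Dom D (Ei (Fo (Dom C f))) = Fo (Dom C f)" "Cod D (Ei (Fo (Dom C f))) = Fo (Go (Fo (Dom C f)))"
      using Ei2[OF b] by auto
    have ib': "Ei (Fo (Cod C f)) \<in> Arr D" "Dom D (Ei (Fo (Cod C f))) = Fo (Cod C f)" "Cod D (Ei (Fo (Cod C f))) = Fo (Go (Fo (Cod C f)))"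
      using Ei2[OF b'] by auto
    have 1: "Fa (Comp C (Ga (Fa f)) (eta (Dom C f))) = Comp D (T (Fa f)) (Ei (Fo (Dom C f)))"
      using fun_comp[OF F] eta1[OF a] Ga1[OF Ff(1)] Ff by simp
    have 2: "Fa (Comp C (eta (Cod C f)) f) = Comp D (Ei (Fo (Cod C f))) (Fa f)" using fun_comp[OF F] eta1[OF a'] f by simp
    have "Comp D (E (Fo (Cod C f))) (Comp D (T (Fa f)) (Ei (Fo (Dom C f))))
        = Comp D (Comp D (E (Fo (Cod C f))) (T (Fa f))) (Ei (Fo (Dom C f)))"
      using Dc TF eb' ib by (simp add: cat_assoc)
    also have "\<dots> = Comp D (Comp D (Fa f) (E (Fo (Dom C f)))) (Ei (Fo (Dom C f)))" using ET[OF Ff(1)] Ff by simp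
    also have "\<dots> = Fa f" using cancel_l2[OF Dc Ei1[OF b] eb(1) Ff(1)] Ff eb by simp
    also have "\<dots> = Comp D (E (Fo (Cod C f))) (Comp D (Ei (Fo (Cod C f))) (Fa f))"
      using cancel_r[OF Dc Ei1[OF b'] eb'(1) Ff(1)] Ff eb' by simp
    finally have 3: "Comp D (E (Fo (Cod C f))) (Comp D (T (Fa f)) (Ei (Fo (Dom C f))))
        = Comp D (E (Fo (Cod C f))) (Comp D (Ei (Fo (Cod C f))) (Fa f))" .
    have 4: "Comp D (T (Fa f)) (Ei (Fo (Dom C f))) = Comp D (Ei (Fo (Cod C f))) (Fa f)"
      by (rule mono_iso[OF Dc Ei1[OF b'] eb'(1) _ _ _ _ 3]) (use Dc TF ib ib' Ff eb' in auto)
    have eq: "Fa (Comp C (eta (Cod C f)) f) = Fa (Comp C (Ga (Fa f)) (eta (Dom C f)))" using 1 2 4 by simp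
    have "Comp C (eta (Cod C f)) f = Comp C (Ga (Fa f)) (eta (Dom C f))"
      by (rule uniq[OF L(1) R(1) _ _ eq]) (simp_all add: L R)
    thus "Comp C (eta (Cod C (f))) (id f) = Comp C ((Ga \<circ> Fa) f) (eta (Dom C f))" by simp
  qed
  have et: "is_nat_iso C C id id (Go \<circ> Fo) (Ga \<circ> Fa) eta" unfolding is_nat_iso_def using et_a et_n by blast
  have ep_a: "E b \<in> Arr D \<and> Dom D (E b) = (Fo \<circ> Go) b \<and> Cod D (E b) = id b \<and> (\<exists>g. is_inverse D (E b) g)"
    if b: "b \<in> Obj D" for b
      using E1[OF b] Ei1[OF b] by auto
  have ep_n: "Comp D (E (Cod D g)) ((Fa \<circ> Ga) g) = Comp D (id g) (E (Dom D g))" if g: "g \<in> Arr D" for g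
  proof -
    have d: "Dom D g \<in> Obj D" and c: "Cod D g \<in> Obj D" using Dc g by auto
    have ge: "Comp D g (E (Dom D g)) \<in> Arr D" "Cod D (Comp D g (E (Dom D g))) = Cod D g" using Dc g E1[OF d] by auto
    have "Comp D (E (Cod D g)) (Fa (Ga g)) = Comp D g (E (Dom D g))"
      using Ga1[OF g] cancel_r[OF Dc Ei1[OF c] _ ge(1)] E1[OF c] ge unfolding T_def by simp
    thus "Comp D (E (Cod D g)) ((Fa \<circ> Ga) g) = Comp D (id g) (E (Dom D g))" by simp
  qed
  have ep: "is_nat_iso D D (Fo \<circ> Go) (Fa \<circ> Ga) id id E" unfolding is_nat_iso_def using ep_a ep_n by blast
  show ?thesis unfolding is_cat_equiv_def using F G et ep by blast
qed


definition sps :: "('s set \<Rightarrow> bool) \<Rightarrow> ('s set \<Rightarrow> 'e set) \<Rightarrow> ('s set \<Rightarrow> 's set \<Rightarrow> 'e \<Rightarrow> 'e) \<Rightarrow> bool" where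
  "sps Op P r \<longleftrightarrow> (\<forall>W. Op W \<longrightarrow> (\<forall>x\<in>P W. r W W x = x)) \<and>
     (\<forall>V W. Op V \<longrightarrow> Op W \<longrightarrow> V \<subseteq> W \<longrightarrow> (\<forall>x\<in>P W. r V W x \<in> P V)) \<and>
     (\<forall>V W Z. Op V \<longrightarrow> Op W \<longrightarrow> Op Z \<longrightarrow> V \<subseteq> W \<longrightarrow> W \<subseteq> Z \<longrightarrow> (\<forall>x\<in>P Z. r V W (r W Z x) = r V Z x)) \<and>
     (\<forall>A B. Op A \<longrightarrow> Op B \<longrightarrow> Op (A \<inter> B) \<and> Op (A \<union> B))"

definition glue :: "('s set \<Rightarrow> bool) \<Rightarrow> ('s set \<Rightarrow> 'e set) \<Rightarrow> ('s set \<Rightarrow> 's set \<Rightarrow> 'e \<Rightarrow> 'e) \<Rightarrow> nat \<Rightarrow> bool" where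
  "glue Op P r n \<longleftrightarrow> (\<forall>U Us. Op U \<longrightarrow> (\<forall>i<n. Op (Us i)) \<longrightarrow> (\<Union>i<n. Us i) = U \<longrightarrow>
     (\<forall>x\<in>P U. \<forall>y\<in>P U. (\<forall>i<n. r (Us i) U x = r (Us i) U y) \<longrightarrow> x = y) \<and>
     (\<forall>s. (\<forall>i<n. s i \<in> P (Us i)) \<longrightarrow>
        (\<forall>i<n. \<forall>j<n. r (Us i \<inter> Us j) (Us i) (s i) = r (Us i \<inter> Us j) (Us j) (s j)) \<longrightarrow>
        (\<exists>x\<in>P U. \<forall>i<n. r (Us i) U x = s i)))"

lemma glueI1: "glue Op P r n \<Longrightarrow> Op U \<Longrightarrow> (\<And>i. i<n \<Longrightarrow> Op (Us i)) \<Longrightarrow> (\<Union>i<n. Us i) = U \<Longrightarrow>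
   x \<in> P U \<Longrightarrow> y \<in> P U \<Longrightarrow> (\<And>i. i<n \<Longrightarrow> r (Us i) U x = r (Us i) U y) \<Longrightarrow> x = y"
  unfolding glue_def by blast

lemma glueI2: "glue Op P r n \<Longrightarrow> Op U \<Longrightarrow> (\<And>i. i<n \<Longrightarrow> Op (Us i)) \<Longrightarrow> (\<Union>i<n. Us i) = U \<Longrightarrow>
   (\<And>i. i<n \<Longrightarrow> s i \<in> P (Us i)) \<Longrightarrow>
   (\<And>i j. i<n \<Longrightarrow> j<n \<Longrightarrow> r (Us i \<inter> Us j) (Us i) (s i) = r (Us i \<inter> Us j) (Us j) (s j)) \<Longrightarrow>
   \<exists>x\<in>P U. \<forall>i<n. r (Us i) U x = s i"
  unfolding glue_def by blast

lemma sps_id: "sps Op P r \<Longrightarrow> Op W \<Longrightarrow> x \<in> P W \<Longrightarrow> r W W x = x"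
  unfolding sps_def by simp
lemma sps_in: "sps Op P r \<Longrightarrow> Op V \<Longrightarrow> Op W \<Longrightarrow> V \<subseteq> W \<Longrightarrow> x \<in> P W \<Longrightarrow> r V W x \<in> P V"
  unfolding sps_def by simp
lemma sps_trans: "sps Op P r \<Longrightarrow> Op V \<Longrightarrow> Op W \<Longrightarrow> Op Z \<Longrightarrow> V \<subseteq> W \<Longrightarrow> W \<subseteq> Z \<Longrightarrow> x \<in> P Z \<Longrightarrow> r V W (r W Z x) = r V Z x"
  unfolding sps_def by simp
lemma sps_Int: "sps Op P r \<Longrightarrow> Op A \<Longrightarrow> Op B \<Longrightarrow> Op (A \<inter> B)"
  unfolding sps_def by simp
lemma sps_Un: "sps Op P r \<Longrightarrow> Op A \<Longrightarrow> Op B \<Longrightarrow> Op (A \<union> B)"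
  unfolding sps_def by simp

lemma sps_UN0: assumes S: "sps Op P r" shows "(\<forall>i<(n::nat). Op (Us i)) \<longrightarrow> 1 \<le> n \<longrightarrow> Op (\<Union>i<n. Us i)"
proof (induction n)
  case 0 thus ?case by simp
next
  case (Suc n)
  show ?case
  proof (intro impI)
    assume a: "\<forall>i<Suc n. Op (Us i)" and "1 \<le> Suc n"
    show "Op (\<Union>i<Suc n. Us i)"
    proof (cases "n = 0")
      case True thus ?thesis using a by (simp add: lessThan_Suc)
    next
      case False
      have "Op (\<Union>i<n. Us i)" using Suc.IH False a by simp
      moreover have "(\<Union>i<Suc n. Us i) = (\<Union>i<n. Us i) \<union> Us n" by (simp add: lessThan_Suc Un_commute)
      ultimately show ?thesis using sps_Un[OF S] a by simp
    qed
  qed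
qed

lemma sps_UN: "sps Op P r \<Longrightarrow> (\<And>i. i<(n::nat) \<Longrightarrow> Op (Us i)) \<Longrightarrow> 1 \<le> n \<Longrightarrow> Op (\<Union>i<n. Us i)"
  using sps_UN0 by blast

lemma lessThan2: "{..<2::nat} = {0,1}" by auto

lemma glue_step:
  assumes S: "sps Op P r" and g2: "glue Op P r 2" and gn: "glue Op P r n" and n: "1 \<le> n"
  shows "glue Op P r (Suc n)"
  unfolding glue_def
proof (intro allI impI)
  fix U Us assume OU: "Op U" and OUs: "\<forall>i<Suc n. Op (Us i)" and cov: "(\<Union>i<Suc n. Us i) = U"
  define V where "V = (\<Union>i<n. Us i)"
  define W where "W = Us n"
  have OUi: "i < n \<Longrightarrow> Op (Us i)" for i using OUs by simp
  have OV: "Op V" unfolding V_def using sps_UN[OF S OUi n] by simp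
  have OW: "Op W" unfolding W_def using OUs by simp
  have UVW: "U = V \<union> W" using cov unfolding V_def W_def by (simp add: lessThan_Suc Un_commute)
  have VU: "V \<subseteq> U" and WU: "W \<subseteq> U" using UVW by auto
  have UiV: "i < n \<Longrightarrow> Us i \<subseteq> V" for i unfolding V_def by auto
  have OVW: "Op (V \<inter> W)" using sps_Int[OF S OV OW] .
  define Us2 where "Us2 i = (if i = 0 then V else W)" for i :: nat
  have O2: "i < 2 \<Longrightarrow> Op (Us2 i)" for i using OV OW unfolding Us2_def by simp
  have cov2: "(\<Union>i<2. Us2 i) = U" unfolding lessThan2 Us2_def using UVW by auto
  have i2: "i < 2 \<Longrightarrow> i = 0 \<or> i = 1" for i :: nat by arith
  show "(\<forall>x\<in>P U. \<forall>y\<in>P U. (\<forall>i<Suc n. r (Us i) U x = r (Us i) U y) \<longrightarrow> x = y) \<and>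
     (\<forall>s. (\<forall>i<Suc n. s i \<in> P (Us i)) \<longrightarrow>
        (\<forall>i<Suc n. \<forall>j<Suc n. r (Us i \<inter> Us j) (Us i) (s i) = r (Us i \<inter> Us j) (Us j) (s j)) \<longrightarrow>
        (\<exists>x\<in>P U. \<forall>i<Suc n. r (Us i) U x = s i))"
  proof (intro conjI ballI allI impI)
    fix x y assume x: "x \<in> P U" and y: "y \<in> P U" and ag: "\<forall>i<Suc n. r (Us i) U x = r (Us i) U y"
    have xV: "r V U x \<in> P V" and yV: "r V U y \<in> P V" using sps_in[OF S OV OU VU] x y by auto
    have "r V U x = r V U y"
    proof (rule glueI1[OF gn OV OUi V_def[symmetric] xV yV])
      fix i assume i: "i < n"
      have "r (Us i) V (r V U x) = r (Us i) U x" using sps_trans[OF S OUi[OF i] OV OU UiV[OF i] VU x] .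
      also have "\<dots> = r (Us i) U y" using ag i by simp
      also have "\<dots> = r (Us i) V (r V U y)" using sps_trans[OF S OUi[OF i] OV OU UiV[OF i] VU y] by simp
      finally show "r (Us i) V (r V U x) = r (Us i) V (r V U y)" .
    qed
    moreover have "r W U x = r W U y" using ag unfolding W_def by simp
    ultimately show "x = y"
      by (intro glueI1[OF g2 OU O2 cov2 x y]) (auto simp: Us2_def dest!: i2)
  next
    fix s assume sP: "\<forall>i<Suc n. s i \<in> P (Us i)"
      and cp: "\<forall>i<Suc n. \<forall>j<Suc n. r (Us i \<inter> Us j) (Us i) (s i) = r (Us i \<inter> Us j) (Us j) (s j)"
    have "\<exists>y\<in>P V. \<forall>i<n. r (Us i) V y = s i"
    proof (rule glueI2[OF gn OV OUi V_def[symmetric]])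
      fix i j assume "i < n" "j < n"
      thus "s i \<in> P (Us i)" "r (Us i \<inter> Us j) (Us i) (s i) = r (Us i \<inter> Us j) (Us j) (s j)"
        using sP cp less_SucI by blast+
    qed
    then obtain y where y: "y \<in> P V" and ry: "\<forall>i<n. r (Us i) V y = s i" by blast
    have sn: "s n \<in> P W" using sP unfolding W_def by simp
    have OiW: "i < n \<Longrightarrow> Op (Us i \<inter> W)" for i using sps_Int[OF S OUi OW] by simp
    have covVW: "(\<Union>i<n. Us i \<inter> W) = V \<inter> W" unfolding V_def by auto
    have y1: "r (V \<inter> W) V y \<in> P (V \<inter> W)" using sps_in[OF S OVW OV _ y] by auto
    have y2: "r (V \<inter> W) W (s n) \<in> P (V \<inter> W)" using sps_in[OF S OVW OW _ sn] by auto
    have cVW: "r (V \<inter> W) V y = r (V \<inter> W) W (s n)"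
    proof (rule glueI1[OF gn OVW OiW covVW y1 y2])
      fix i assume i: "i < n"
      have "r (Us i \<inter> W) (V \<inter> W) (r (V \<inter> W) V y) = r (Us i \<inter> W) V y"
      proof -
        have s1: "Us i \<inter> W \<subseteq> V \<inter> W" using UiV[OF i] by auto
        show ?thesis using sps_trans[OF S OiW[OF i] OVW OV s1 _ y] by simp
      qed
      also have "\<dots> = r (Us i \<inter> W) (Us i) (r (Us i) V y)"
        using sps_trans[OF S OiW[OF i] OUi[OF i] OV _ UiV[OF i] y] by auto
      also have "\<dots> = r (Us i \<inter> Us n) (Us i) (s i)" using ry i unfolding W_def by simp
      also have "\<dots> = r (Us i \<inter> Us n) (Us n) (s n)" using cp[rule_format, of i n] i by simp
      also have "\<dots> = r (Us i \<inter> W) (V \<inter> W) (r (V \<inter> W) W (s n))"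
      proof -
        have s1: "Us i \<inter> W \<subseteq> V \<inter> W" using UiV[OF i] by auto
        show ?thesis using sps_trans[OF S OiW[OF i] OVW OW s1 _ sn] unfolding W_def by simp
      qed
      finally show "r (Us i \<inter> W) (V \<inter> W) (r (V \<inter> W) V y) = r (Us i \<inter> W) (V \<inter> W) (r (V \<inter> W) W (s n))" .
    qed
    define s2 where "s2 i = (if i = 0 then y else s n)" for i :: nat
    have s2P: "i < 2 \<Longrightarrow> s2 i \<in> P (Us2 i)" for i using y sn unfolding s2_def Us2_def by simp
    have WV: "W \<inter> V = V \<inter> W" by blast
    have s2c: "r (Us2 i \<inter> Us2 j) (Us2 i) (s2 i) = r (Us2 i \<inter> Us2 j) (Us2 j) (s2 j)" if "i < 2" "j < 2" for i j
      using i2[OF that(1)] i2[OF that(2)] cVW unfolding s2_def Us2_def by (auto simp: WV)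
    obtain x where x: "x \<in> P U" and rx: "\<forall>i<2. r (Us2 i) U x = s2 i"
      using glueI2[OF g2 OU O2 cov2 s2P s2c] by blast
    have rxV: "r V U x = y" using rx unfolding Us2_def s2_def by (metis zero_less_numeral)
    have rxW: "r W U x = s n" using rx unfolding Us2_def s2_def by (metis one_less_numeral_iff semiring_norm(76) zero_neq_one)
    have "\<forall>i<Suc n. r (Us i) U x = s i"
    proof (intro allI impI)
      fix i assume i: "i < Suc n"
      show "r (Us i) U x = s i"
      proof (cases "i < n")
        case True
        have "r (Us i) U x = r (Us i) V (r V U x)" using sps_trans[OF S OUi[OF True] OV OU UiV[OF True] VU x] by simp
        thus ?thesis using rxV ry True by simp
      next
        case False
        hence "i = n" using i by simp
        thus ?thesis using rxW unfolding W_def by simp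
      qed
    qed
    thus "\<exists>x\<in>P U. \<forall>i<Suc n. r (Us i) U x = s i" using x by blast
  qed
qed

lemma glue_all: assumes S: "sps Op P r" and g2: "glue Op P r 2" shows "n \<ge> 2 \<Longrightarrow> glue Op P r n"
proof (induction n)
  case 0 thus ?case by simp
next
  case (Suc n)
  show ?case
  proof (cases "n = 1")
    case True thus ?thesis using g2 by (simp add: numeral_2_eq_2)
  next
    case False
    hence "n \<ge> 2" using Suc.prems by simp
    thus ?thesis using glue_step[OF S g2 Suc.IH] by simp
  qed
qed


locale gp =
  fixes X :: "'a topology" and FF :: "'a set \<Rightarrow> ('o, 'm) cat"
    and resO :: "'a set \<Rightarrow> 'a set \<Rightarrow> 'o \<Rightarrow> 'o" and resA :: "'a set \<Rightarrow> 'a set \<Rightarrow> 'm \<Rightarrow> 'm"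
  assumes gp: "grp_presheaf X FF resO resA"
begin

lemma gp1: "\<forall>U. openin X U \<longrightarrow> is_groupoid (FF U)"
  using gp unfolding grp_presheaf_def by (elim conjE) assumption
lemma gp2: "\<forall>V W. openin X V \<longrightarrow> openin X W \<longrightarrow> V \<subseteq> W \<longrightarrow>
        is_functor (FF W) (FF V) (resO V W) (resA V W)"
  using gp unfolding grp_presheaf_def by (elim conjE) assumption
lemma gp3: "\<forall>W. openin X W \<longrightarrow> (\<forall>x\<in>Obj (FF W). resO W W x = x) \<and> (\<forall>f\<in>Arr (FF W). resA W W f = f)"
  using gp unfolding grp_presheaf_def by (elim conjE) assumption
lemma gp4: "\<forall>V W Z. openin X V \<longrightarrow> openin X W \<longrightarrow> openin X Z \<longrightarrow> V \<subseteq> W \<longrightarrow> W \<subseteq> Z \<longrightarrow>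
        (\<forall>x\<in>Obj (FF Z). resO V W (resO W Z x) = resO V Z x) \<and>
        (\<forall>f\<in>Arr (FF Z). resA V W (resA W Z f) = resA V Z f)"
  using gp unfolding grp_presheaf_def by (elim conjE) assumption

lemma grpd: "openin X U \<Longrightarrow> is_groupoid (FF U)"
  using gp1 by blast
lemma catU[simp]: "openin X U \<Longrightarrow> is_category (FF U)"
  using grpd grp_cat by blast
lemma resF: "openin X V \<Longrightarrow> openin X W \<Longrightarrow> V \<subseteq> W \<Longrightarrow> is_functor (FF W) (FF V) (resO V W) (resA V W)"
  using gp2 by blast

lemma rO_obj[simp]: "openin X V \<Longrightarrow> openin X W \<Longrightarrow> V \<subseteq> W \<Longrightarrow> x \<in> Obj (FF W) \<Longrightarrow> resO V W x \<in> Obj (FF V)"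
  using fun_obj[OF resF] by blast
lemma rA_arr[simp]: "openin X V \<Longrightarrow> openin X W \<Longrightarrow> V \<subseteq> W \<Longrightarrow> f \<in> Arr (FF W) \<Longrightarrow> resA V W f \<in> Arr (FF V)"
  using fun_arr[OF resF] by blast
lemma rA_dom[simp]: "openin X V \<Longrightarrow> openin X W \<Longrightarrow> V \<subseteq> W \<Longrightarrow> f \<in> Arr (FF W) \<Longrightarrow> Dom (FF V) (resA V W f) = resO V W (Dom (FF W) f)"
  using fun_dom[OF resF] by blast
lemma rA_cod[simp]: "openin X V \<Longrightarrow> openin X W \<Longrightarrow> V \<subseteq> W \<Longrightarrow> f \<in> Arr (FF W) \<Longrightarrow> Cod (FF V) (resA V W f) = resO V W (Cod (FF W) f)"
  using fun_cod[OF resF] by blast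
lemma rA_ide[simp]: "openin X V \<Longrightarrow> openin X W \<Longrightarrow> V \<subseteq> W \<Longrightarrow> x \<in> Obj (FF W) \<Longrightarrow> resA V W (Ide (FF W) x) = Ide (FF V) (resO V W x)"
  using fun_ide[OF resF] by blast
lemma rA_comp[simp]: "openin X V \<Longrightarrow> openin X W \<Longrightarrow> V \<subseteq> W \<Longrightarrow> f \<in> Arr (FF W) \<Longrightarrow> g \<in> Arr (FF W) \<Longrightarrow> Cod (FF W) f = Dom (FF W) g \<Longrightarrow>
   resA V W (Comp (FF W) g f) = Comp (FF V) (resA V W g) (resA V W f)"
  using fun_comp[OF resF] by blast
lemma rO_id[simp]: "openin X W \<Longrightarrow> x \<in> Obj (FF W) \<Longrightarrow> resO W W x = x"
  using gp3 by simp
lemma rA_id[simp]: "openin X W \<Longrightarrow> f \<in> Arr (FF W) \<Longrightarrow> resA W W f = f"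
  using gp3 by simp
lemma rO_trans[simp]: "openin X V \<Longrightarrow> openin X W \<Longrightarrow> openin X Z \<Longrightarrow> V \<subseteq> W \<Longrightarrow> W \<subseteq> Z \<Longrightarrow> x \<in> Obj (FF Z) \<Longrightarrow>
   resO V W (resO W Z x) = resO V Z x"
  using gp4 by simp
lemma rA_trans[simp]: "openin X V \<Longrightarrow> openin X W \<Longrightarrow> openin X Z \<Longrightarrow> V \<subseteq> W \<Longrightarrow> W \<subseteq> Z \<Longrightarrow> f \<in> Arr (FF Z) \<Longrightarrow>
   resA V W (resA W Z f) = resA V Z f"
  using gp4 by simp

declare openin_Int[simp]

lemma sI1: "(A::'x set) \<subseteq> C \<Longrightarrow> A \<inter> B \<subseteq> C" by blast
lemma sI2: "(B::'x set) \<subseteq> C \<Longrightarrow> A \<inter> B \<subseteq> C" by blast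
lemmas ss[simp] = sI1 sI2

lemma sps_O: "sps (openin X) (\<lambda>U. Obj (FF U)) resO"
  unfolding sps_def
  apply (intro conjI allI impI ballI)
      apply (rule rO_id; assumption)
     apply (rule rO_obj; assumption)
    apply (rule rO_trans; assumption)
   apply (rule openin_Int; assumption)
  apply (rule openin_Un; assumption)
  done

lemma sps_A: "sps (openin X) (\<lambda>U. Arr (FF U)) resA"
  unfolding sps_def
  apply (intro conjI allI impI ballI)
      apply (rule rA_id; assumption)
     apply (rule rA_arr; assumption)
    apply (rule rA_trans; assumption)
   apply (rule openin_Int; assumption)
  apply (rule openin_Un; assumption)
  done

lemma cover_sub: "open_cover X U n Us \<Longrightarrow> i < n \<Longrightarrow> Us i \<subseteq> U"
  unfolding open_cover_def by blast
lemma cover_open: "open_cover X U n Us \<Longrightarrow> i < n \<Longrightarrow> openin X (Us i)"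
  unfolding open_cover_def by blast
lemma cover_openU: "open_cover X U n Us \<Longrightarrow> openin X U"
  unfolding open_cover_def by blast

lemma test_sub: "openin X U \<Longrightarrow> (\<And>i. i < n \<Longrightarrow> openin X (Us i)) \<Longrightarrow> (\<And>i. i < n \<Longrightarrow> Us i \<subseteq> U) \<Longrightarrow> i < n \<Longrightarrow> j < n \<Longrightarrow> k < n \<Longrightarrow> x \<in> Obj (FF U) \<Longrightarrow>
   resO (Us i \<inter> Us j \<inter> Us k) (Us i \<inter> Us j) (resO (Us i \<inter> Us j) (Us i) (resO (Us i) U x)) = resO (Us i \<inter> Us j \<inter> Us k) U x"
  by simp

lemma sh_functor:
  assumes c: "open_cover X U n Us"
  shows "is_functor (FF U) (eq_cat FF resO resA n Us) (\<lambda>x. \<lambda>i\<in>{..<n}. resO (Us i) U x) (\<lambda>f. \<lambda>i\<in>{..<n}. resA (Us i) U f)"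
proof -
  have OU: "openin X U" and Oi: "\<And>i. i<n \<Longrightarrow> openin X (Us i)" and Si: "\<And>i. i<n \<Longrightarrow> Us i \<subseteq> U"
    using c cover_openU cover_open cover_sub by blast+
  have o: "(\<lambda>i\<in>{..<n}. resO (Us i) U x) \<in> Obj (eq_cat FF resO resA n Us)" if x: "x \<in> Obj (FF U)" for x
    unfolding eq_cat_def using x OU Oi Si by (simp add: restrict_PiE_iff cong: restrict_cong)
  have a: "(\<lambda>i\<in>{..<n}. resA (Us i) U f) \<in> Arr (eq_cat FF resO resA n Us)" if f: "f \<in> Arr (FF U)" for f
    unfolding eq_cat_def using f OU Oi Si by (simp add: restrict_PiE_iff cong: restrict_cong)
  have d: "Dom (eq_cat FF resO resA n Us) (\<lambda>i\<in>{..<n}. resA (Us i) U f) = (\<lambda>i\<in>{..<n}. resO (Us i) U (Dom (FF U) f))"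
    if f: "f \<in> Arr (FF U)" for f
    unfolding eq_cat_def using f OU Oi Si by (simp cong: restrict_cong)
  have cd: "Cod (eq_cat FF resO resA n Us) (\<lambda>i\<in>{..<n}. resA (Us i) U f) = (\<lambda>i\<in>{..<n}. resO (Us i) U (Cod (FF U) f))"
    if f: "f \<in> Arr (FF U)" for f
    unfolding eq_cat_def using f OU Oi Si by (simp cong: restrict_cong)
  have i: "(\<lambda>i\<in>{..<n}. resA (Us i) U (Ide (FF U) x)) = Ide (eq_cat FF resO resA n Us) (\<lambda>i\<in>{..<n}. resO (Us i) U x)"
    if x: "x \<in> Obj (FF U)" for x
    unfolding eq_cat_def using x OU Oi Si by (simp cong: restrict_cong)
  have cp: "(\<lambda>i\<in>{..<n}. resA (Us i) U (Comp (FF U) g f)) = Comp (eq_cat FF resO resA n Us) (\<lambda>i\<in>{..<n}. resA (Us i) U g) (\<lambda>i\<in>{..<n}. resA (Us i) U f)"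
    if f: "f \<in> Arr (FF U)" and g: "g \<in> Arr (FF U)" and fg: "Cod (FF U) f = Dom (FF U) g" for f g
    unfolding eq_cat_def using f g fg OU Oi Si by (simp cong: restrict_cong)
  show ?thesis unfolding is_functor_def using o a d cd i cp by simp
qed

end

lemma iso_bij:
  assumes "is_cat_iso C D Fo Fa"
  shows "(\<forall>a\<in>Obj C. \<forall>a'\<in>Obj C. Fo a = Fo a' \<longrightarrow> a = a') \<and> (\<forall>b\<in>Obj D. \<exists>a\<in>Obj C. Fo a = b) \<and>
         (\<forall>a\<in>Arr C. \<forall>a'\<in>Arr C. Fa a = Fa a' \<longrightarrow> a = a') \<and> (\<forall>b\<in>Arr D. \<exists>a\<in>Arr C. Fa a = b)"
proof -
  obtain Go Ga where G: "is_functor D C Go Ga" and 1: "\<forall>a\<in>Obj C. Go (Fo a) = a" and 2: "\<forall>f\<in>Arr C. Ga (Fa f) = f"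
    and 3: "\<forall>b\<in>Obj D. Fo (Go b) = b" and 4: "\<forall>g\<in>Arr D. Fa (Ga g) = g"
    using assms unfolding is_cat_iso_def by blast
  show ?thesis
  proof (intro conjI ballI impI)
    fix a a' assume a: "a \<in> Obj C" and a': "a' \<in> Obj C" and e: "Fo a = Fo a'"
    have "Go (Fo a) = Go (Fo a')" using e by simp
    thus "a = a'" using 1 a a' by simp
  next
    fix b assume b: "b \<in> Obj D"
    show "\<exists>a\<in>Obj C. Fo a = b" using fun_obj[OF G b] 3 b by blast
  next
    fix a a' assume a: "a \<in> Arr C" and a': "a' \<in> Arr C" and e: "Fa a = Fa a'"
    have "Ga (Fa a) = Ga (Fa a')" using e by simp
    thus "a = a'" using 2 a a' by simp
  next
    fix b assume b: "b \<in> Arr D"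
    show "\<exists>a\<in>Arr C. Fa a = b" using fun_arr[OF G b] 4 b by blast
  qed
qed

context gp begin

lemma sh_glue:
  assumes sh: "sh_cond X FF resO resA n"
  shows "glue (openin X) (\<lambda>U. Obj (FF U)) resO n \<and> glue (openin X) (\<lambda>U. Arr (FF U)) resA n"
proof -
  have main: "((\<forall>x\<in>Obj (FF U). \<forall>y\<in>Obj (FF U). (\<forall>i<n. resO (Us i) U x = resO (Us i) U y) \<longrightarrow> x = y) \<and>
     (\<forall>s. (\<forall>i<n. s i \<in> Obj (FF (Us i))) \<longrightarrow>
        (\<forall>i<n. \<forall>j<n. resO (Us i \<inter> Us j) (Us i) (s i) = resO (Us i \<inter> Us j) (Us j) (s j)) \<longrightarrow>
        (\<exists>x\<in>Obj (FF U). \<forall>i<n. resO (Us i) U x = s i))) \<and>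
     ((\<forall>x\<in>Arr (FF U). \<forall>y\<in>Arr (FF U). (\<forall>i<n. resA (Us i) U x = resA (Us i) U y) \<longrightarrow> x = y) \<and>
     (\<forall>s. (\<forall>i<n. s i \<in> Arr (FF (Us i))) \<longrightarrow>
        (\<forall>i<n. \<forall>j<n. resA (Us i \<inter> Us j) (Us i) (s i) = resA (Us i \<inter> Us j) (Us j) (s j)) \<longrightarrow>
        (\<exists>x\<in>Arr (FF U). \<forall>i<n. resA (Us i) U x = s i)))"
    if OU: "openin X U" and Oi: "\<forall>i<n. openin X (Us i)" and cv: "(\<Union>i<n. Us i) = U" for U Us
  proof -
    have c: "open_cover X U n Us" unfolding open_cover_def using OU Oi cv by blast
    have B: "(\<forall>a\<in>Obj (FF U). \<forall>a'\<in>Obj (FF U). (\<lambda>i\<in>{..<n}. resO (Us i) U a) = (\<lambda>i\<in>{..<n}. resO (Us i) U a') \<longrightarrow> a = a') \<and>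
      (\<forall>b\<in>Obj (eq_cat FF resO resA n Us). \<exists>a\<in>Obj (FF U). (\<lambda>i\<in>{..<n}. resO (Us i) U a) = b) \<and>
      (\<forall>a\<in>Arr (FF U). \<forall>a'\<in>Arr (FF U). (\<lambda>i\<in>{..<n}. resA (Us i) U a) = (\<lambda>i\<in>{..<n}. resA (Us i) U a') \<longrightarrow> a = a') \<and>
      (\<forall>b\<in>Arr (eq_cat FF resO resA n Us). \<exists>a\<in>Arr (FF U). (\<lambda>i\<in>{..<n}. resA (Us i) U a) = b)"
      using iso_bij sh c unfolding sh_cond_def by blast
    show ?thesis
    proof (intro conjI ballI allI impI)
      fix x y assume x: "x \<in> Obj (FF U)" and y: "y \<in> Obj (FF U)" and ag: "\<forall>i<n. resO (Us i) U x = resO (Us i) U y"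
      have "(\<lambda>i\<in>{..<n}. resO (Us i) U x) = (\<lambda>i\<in>{..<n}. resO (Us i) U y)"
        by (rule restrict_ext) (simp add: ag)
      thus "x = y" using B x y by blast
    next
      fix s assume s1: "\<forall>i<n. s i \<in> Obj (FF (Us i))"
        and s2: "\<forall>i<n. \<forall>j<n. resO (Us i \<inter> Us j) (Us i) (s i) = resO (Us i \<inter> Us j) (Us j) (s j)"
      have "restrict s {..<n} \<in> Obj (eq_cat FF resO resA n Us)"
        unfolding eq_cat_def using s1 s2 by (simp add: restrict_PiE_iff)
      then obtain a where a: "a \<in> Obj (FF U)" and e: "(\<lambda>i\<in>{..<n}. resO (Us i) U a) = restrict s {..<n}" using B by blast
      have "\<forall>i<n. resO (Us i) U a = s i"
      proof (intro allI impI)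
        fix i assume i: "i < n"
        show "resO (Us i) U a = s i" using fun_cong[OF e, of i] i by simp
      qed
      thus "\<exists>x\<in>Obj (FF U). \<forall>i<n. resO (Us i) U x = s i" using a by blast
    next
      fix x y assume x: "x \<in> Arr (FF U)" and y: "y \<in> Arr (FF U)" and ag: "\<forall>i<n. resA (Us i) U x = resA (Us i) U y"
      have "(\<lambda>i\<in>{..<n}. resA (Us i) U x) = (\<lambda>i\<in>{..<n}. resA (Us i) U y)"
        by (rule restrict_ext) (simp add: ag)
      thus "x = y" using B x y by blast
    next
      fix s assume s1: "\<forall>i<n. s i \<in> Arr (FF (Us i))"
        and s2: "\<forall>i<n. \<forall>j<n. resA (Us i \<inter> Us j) (Us i) (s i) = resA (Us i \<inter> Us j) (Us j) (s j)"
      have "restrict s {..<n} \<in> Arr (eq_cat FF resO resA n Us)"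
        unfolding eq_cat_def using s1 s2 by (simp add: restrict_PiE_iff)
      then obtain a where a: "a \<in> Arr (FF U)" and e: "(\<lambda>i\<in>{..<n}. resA (Us i) U a) = restrict s {..<n}" using B by blast
      have "\<forall>i<n. resA (Us i) U a = s i"
      proof (intro allI impI)
        fix i assume i: "i < n"
        show "resA (Us i) U a = s i" using fun_cong[OF e, of i] i by simp
      qed
      thus "\<exists>x\<in>Arr (FF U). \<forall>i<n. resA (Us i) U x = s i" using a by blast
    qed
  qed
  have gO: "glue (openin X) (\<lambda>U. Obj (FF U)) resO n" unfolding glue_def
    apply (intro allI impI)
    apply (rule main[THEN conjunct1])
      apply assumption+
    done
  have gA: "glue (openin X) (\<lambda>U. Arr (FF U)) resA n" unfolding glue_def
    apply (intro allI impI)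
    apply (rule main[THEN conjunct2])
      apply assumption+
    done
  show ?thesis using gO gA by (rule conjI)
qed

lemma glue_sh:
  assumes gO: "glue (openin X) (\<lambda>U. Obj (FF U)) resO n" and gA: "glue (openin X) (\<lambda>U. Arr (FF U)) resA n"
  shows "sh_cond X FF resO resA n"
  unfolding sh_cond_def
proof (intro allI impI)
  fix U Us assume c: "open_cover X U n Us"
  have OU: "openin X U" and Oi: "\<And>i. i<n \<Longrightarrow> openin X (Us i)" and cv: "(\<Union>i<n. Us i) = U"
    using c unfolding open_cover_def by blast+
  have Si: "\<And>i. i<n \<Longrightarrow> Us i \<subseteq> U" using cover_sub[OF c] .
  note F = sh_functor[OF c]
  have bo: "bij_betw (\<lambda>x. \<lambda>i\<in>{..<n}. resO (Us i) U x) (Obj (FF U)) (Obj (eq_cat FF resO resA n Us))"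
    unfolding bij_betw_def
  proof
    show "inj_on (\<lambda>x. \<lambda>i\<in>{..<n}. resO (Us i) U x) (Obj (FF U))"
    proof (rule inj_onI)
      fix x y assume x: "x \<in> Obj (FF U)" and y: "y \<in> Obj (FF U)" and e: "(\<lambda>i\<in>{..<n}. resO (Us i) U x) = (\<lambda>i\<in>{..<n}. resO (Us i) U y)"
      show "x = y"
      proof (rule glueI1[OF gO OU Oi cv x y])
        fix i assume i: "i < n" show "resO (Us i) U x = resO (Us i) U y" using fun_cong[OF e, of i] i by simp
      qed
    qed
    show "(\<lambda>x. \<lambda>i\<in>{..<n}. resO (Us i) U x) ` Obj (FF U) = Obj (eq_cat FF resO resA n Us)"
    proof
      show "(\<lambda>x. \<lambda>i\<in>{..<n}. resO (Us i) U x) ` Obj (FF U) \<subseteq> Obj (eq_cat FF resO resA n Us)"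
        using fun_obj[OF F] by blast
      show "Obj (eq_cat FF resO resA n Us) \<subseteq> (\<lambda>x. \<lambda>i\<in>{..<n}. resO (Us i) U x) ` Obj (FF U)"
      proof
        fix b assume b: "b \<in> Obj (eq_cat FF resO resA n Us)"
        have b1: "b \<in> PiE {..<n} (\<lambda>i. Obj (FF (Us i)))"
          and b2: "\<forall>i<n. \<forall>j<n. resO (Us i \<inter> Us j) (Us i) (b i) = resO (Us i \<inter> Us j) (Us j) (b j)"
          using b unfolding eq_cat_def by auto
        have "\<exists>x\<in>Obj (FF U). \<forall>i<n. resO (Us i) U x = b i"
          by (rule glueI2[OF gO OU Oi cv]) (use b1 b2 in auto)
        then obtain x where x: "x \<in> Obj (FF U)" and e: "\<forall>i<n. resO (Us i) U x = b i" by blast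
        have "(\<lambda>i\<in>{..<n}. resO (Us i) U x) = restrict b {..<n}" using e by (intro restrict_ext) simp
        also have "\<dots> = b" using b1 by simp
        finally show "b \<in> (\<lambda>x. \<lambda>i\<in>{..<n}. resO (Us i) U x) ` Obj (FF U)" using x by blast
      qed
    qed
  qed
  have ba: "bij_betw (\<lambda>x. \<lambda>i\<in>{..<n}. resA (Us i) U x) (Arr (FF U)) (Arr (eq_cat FF resO resA n Us))"
    unfolding bij_betw_def
  proof
    show "inj_on (\<lambda>x. \<lambda>i\<in>{..<n}. resA (Us i) U x) (Arr (FF U))"
    proof (rule inj_onI)
      fix x y assume x: "x \<in> Arr (FF U)" and y: "y \<in> Arr (FF U)" and e: "(\<lambda>i\<in>{..<n}. resA (Us i) U x) = (\<lambda>i\<in>{..<n}. resA (Us i) U y)"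
      show "x = y"
      proof (rule glueI1[OF gA OU Oi cv x y])
        fix i assume i: "i < n" show "resA (Us i) U x = resA (Us i) U y" using fun_cong[OF e, of i] i by simp
      qed
    qed
    show "(\<lambda>x. \<lambda>i\<in>{..<n}. resA (Us i) U x) ` Arr (FF U) = Arr (eq_cat FF resO resA n Us)"
    proof
      show "(\<lambda>x. \<lambda>i\<in>{..<n}. resA (Us i) U x) ` Arr (FF U) \<subseteq> Arr (eq_cat FF resO resA n Us)"
        using fun_arr[OF F] by blast
      show "Arr (eq_cat FF resO resA n Us) \<subseteq> (\<lambda>x. \<lambda>i\<in>{..<n}. resA (Us i) U x) ` Arr (FF U)"
      proof
        fix b assume b: "b \<in> Arr (eq_cat FF resO resA n Us)"
        have b1: "b \<in> PiE {..<n} (\<lambda>i. Arr (FF (Us i)))"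
          and b2: "\<forall>i<n. \<forall>j<n. resA (Us i \<inter> Us j) (Us i) (b i) = resA (Us i \<inter> Us j) (Us j) (b j)"
          using b unfolding eq_cat_def by auto
        have "\<exists>x\<in>Arr (FF U). \<forall>i<n. resA (Us i) U x = b i"
          by (rule glueI2[OF gA OU Oi cv]) (use b1 b2 in auto)
        then obtain x where x: "x \<in> Arr (FF U)" and e: "\<forall>i<n. resA (Us i) U x = b i" by blast
        have "(\<lambda>i\<in>{..<n}. resA (Us i) U x) = restrict b {..<n}" using e by (intro restrict_ext) simp
        also have "\<dots> = b" using b1 by simp
        finally show "b \<in> (\<lambda>x. \<lambda>i\<in>{..<n}. resA (Us i) U x) ` Arr (FF U)" using x by blast
      qed
    qed
  qed
  show "is_cat_iso (FF U) (eq_cat FF resO resA n Us) (\<lambda>x. \<lambda>i\<in>{..<n}. resO (Us i) U x) (\<lambda>f. \<lambda>i\<in>{..<n}. resA (Us i) U f)"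
    using iso_of_bij[OF catU[OF OU] F bo ba] .
qed

lemma sh_all: "sh_cond X FF resO resA 2 \<Longrightarrow> n \<ge> 2 \<Longrightarrow> sh_cond X FF resO resA n"
  using sh_glue glue_sh glue_all[OF sps_O] glue_all[OF sps_A] by blast

end

lemma fun_inv: assumes F: "is_functor C D Fo Fa" and C: "is_category C" and f: "f \<in> Arr C" and i: "is_inverse C f g"
  shows "is_inverse D (Fa f) (Fa g)"
proof -
  have g: "g \<in> Arr C" "Dom C g = Cod C f" "Cod C g = Dom C f" using inv_arr[OF i] inv_dom[OF i] inv_cod[OF i] by auto
  have "Comp D (Fa g) (Fa f) = Fa (Comp C g f)" using fun_comp[OF F f g(1)] g by simp
  also have "\<dots> = Fa (Ide C (Dom C f))" using inv_l[OF i] by simp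
  also have "\<dots> = Ide D (Dom D (Fa f))" using fun_ide[OF F] fun_dom[OF F f] C f by simp
  finally have 1: "Comp D (Fa g) (Fa f) = Ide D (Dom D (Fa f))" .
  have "Comp D (Fa f) (Fa g) = Fa (Comp C f g)" using fun_comp[OF F g(1) f] g by simp
  also have "\<dots> = Fa (Ide C (Cod C f))" using inv_r[OF i] by simp
  also have "\<dots> = Ide D (Cod D (Fa f))" using fun_ide[OF F] fun_cod[OF F f] C f by simp
  finally have 2: "Comp D (Fa f) (Fa g) = Ide D (Cod D (Fa f))" .
  show ?thesis unfolding is_inverse_def using 1 2 fun_arr[OF F g(1)] fun_dom[OF F g(1)] fun_cod[OF F g(1)]
      fun_dom[OF F f] fun_cod[OF F f] g by simp
qed

lemma conj_inv:
  assumes C: "is_category C" and a: "is_inverse C a a'" and b: "is_inverse C b b'"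
    and ar: "a \<in> Arr C" "b \<in> Arr C" "p \<in> Arr C" "q \<in> Arr C"
    and ty: "Cod C a = Dom C q" "Cod C p = Dom C b" "Dom C a = Dom C p" "Cod C q = Cod C b"
    and e: "Comp C q a = Comp C b p"
  shows "Comp C p a' = Comp C b' q"
proof -
  have a': "a' \<in> Arr C" "Dom C a' = Cod C a" "Cod C a' = Dom C a" using inv_arr[OF a] inv_dom[OF a] inv_cod[OF a] by auto
  have b': "b' \<in> Arr C" "Dom C b' = Cod C b" "Cod C b' = Dom C b" using inv_arr[OF b] inv_dom[OF b] inv_cod[OF b] by auto
  have "Comp C b' q = Comp C b' (Comp C (Comp C q a) a')"
    using cancel_l2[OF C a ar(1) ar(4)] ty by simp
  also have "\<dots> = Comp C b' (Comp C (Comp C b p) a')" using e by simp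
  also have "\<dots> = Comp C b' (Comp C b (Comp C p a'))" using C ar a' ty by (simp add: cat_assoc)
  also have "\<dots> = Comp C p a'" using cancel_l[OF C b ar(2)] C ar a' ty by simp
  finally show ?thesis by simp
qed

context gp begin

abbreviation "DO n Us \<equiv> descent_objs FF resO resA n Us"
abbreviation "DC n Us \<equiv> descent_cat FF resO resA n Us"

lemma DC_simps[simp]: "Obj (DC n Us) = DO n Us" "Dom (DC n Us) (s,t,f) = s" "Cod (DC n Us) (s,t,f) = t"
  "Comp (DC n Us) (s',t',g) (s,t,f) = (s, t', \<lambda>i\<in>{..<n}. Comp (FF (Us i)) (g i) (f i))"
  "Ide (DC n Us) s = (s, s, \<lambda>i\<in>{..<n}. Ide (FF (Us i)) (fst s i))"
  by (simp_all add: descent_cat_def)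

lemma darr_iff: "(s,t,f) \<in> Arr (DC n Us) \<longleftrightarrow> s \<in> DO n Us \<and> t \<in> DO n Us \<and> f \<in> PiE {..<n} (\<lambda>i. Arr (FF (Us i))) \<and>
   (\<forall>i<n. Dom (FF (Us i)) (f i) = fst s i \<and> Cod (FF (Us i)) (f i) = fst t i) \<and>
   (\<forall>i<n. \<forall>j<n. Comp (FF (Us i \<inter> Us j)) (snd t i j) (resA (Us i \<inter> Us j) (Us i) (f i))
       = Comp (FF (Us i \<inter> Us j)) (resA (Us i \<inter> Us j) (Us j) (f j)) (snd s i j))"
  by (simp add: descent_cat_def)

lemma dobj_iff: "(x,phi) \<in> DO n Us \<longleftrightarrow> x \<in> PiE {..<n} (\<lambda>i. Obj (FF (Us i))) \<and>
        phi \<in> PiE {..<n} (\<lambda>i. PiE {..<n} (\<lambda>j. Arr (FF (Us i \<inter> Us j)))) \<and>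
        (\<forall>i<n. \<forall>j<n.
           Dom (FF (Us i \<inter> Us j)) (phi i j) = resO (Us i \<inter> Us j) (Us i) (x i) \<and>
           Cod (FF (Us i \<inter> Us j)) (phi i j) = resO (Us i \<inter> Us j) (Us j) (x j)) \<and>
        (\<forall>i<n. \<forall>j<n. \<forall>k<n.
           Comp (FF (Us i \<inter> Us j \<inter> Us k))
             (resA (Us i \<inter> Us j \<inter> Us k) (Us j \<inter> Us k) (phi j k))
             (resA (Us i \<inter> Us j \<inter> Us k) (Us i \<inter> Us j) (phi i j))
           = resA (Us i \<inter> Us j \<inter> Us k) (Us i \<inter> Us k) (phi i k))"
  by (simp add: descent_objs_def)

lemma dobjD:
  assumes "s \<in> DO n Us" "i < n" "j < n"
  shows "fst s i \<in> Obj (FF (Us i))" "snd s i j \<in> Arr (FF (Us i \<inter> Us j))"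
    "Dom (FF (Us i \<inter> Us j)) (snd s i j) = resO (Us i \<inter> Us j) (Us i) (fst s i)"
    "Cod (FF (Us i \<inter> Us j)) (snd s i j) = resO (Us i \<inter> Us j) (Us j) (fst s j)"
proof -
  obtain x phi where s: "s = (x, phi)" by (cases s)
  have "(x,phi) \<in> DO n Us" using assms(1) s by simp
  note d = this[unfolded dobj_iff]
  show "fst s i \<in> Obj (FF (Us i))" using d assms s by (auto simp: PiE_iff)
  show "snd s i j \<in> Arr (FF (Us i \<inter> Us j))" using d assms s by (auto simp: PiE_iff)
  show "Dom (FF (Us i \<inter> Us j)) (snd s i j) = resO (Us i \<inter> Us j) (Us i) (fst s i)" using d assms s by auto
  show "Cod (FF (Us i \<inter> Us j)) (snd s i j) = resO (Us i \<inter> Us j) (Us j) (fst s j)" using d assms s by auto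
qed

lemma dobj_cocycle:
  assumes "s \<in> DO n Us" "i < n" "j < n" "k < n"
  shows "Comp (FF (Us i \<inter> Us j \<inter> Us k))
             (resA (Us i \<inter> Us j \<inter> Us k) (Us j \<inter> Us k) (snd s j k))
             (resA (Us i \<inter> Us j \<inter> Us k) (Us i \<inter> Us j) (snd s i j))
           = resA (Us i \<inter> Us j \<inter> Us k) (Us i \<inter> Us k) (snd s i k)"
proof -
  obtain x phi where s: "s = (x, phi)" by (cases s)
  have "(x,phi) \<in> DO n Us" using assms(1) s by simp
  note d = this[unfolded dobj_iff]
  show ?thesis using d assms s by auto
qed

lemma darrD:
  assumes "(s,t,f) \<in> Arr (DC n Us)" "i < n" "j < n"
  shows "s \<in> DO n Us" "t \<in> DO n Us" "f \<in> PiE {..<n} (\<lambda>i. Arr (FF (Us i)))" "f i \<in> Arr (FF (Us i))"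
    "Dom (FF (Us i)) (f i) = fst s i" "Cod (FF (Us i)) (f i) = fst t i"
    "Comp (FF (Us i \<inter> Us j)) (snd t i j) (resA (Us i \<inter> Us j) (Us i) (f i))
       = Comp (FF (Us i \<inter> Us j)) (resA (Us i \<inter> Us j) (Us j) (f j)) (snd s i j)"
  using assms unfolding darr_iff by (auto simp: PiE_iff)

end

context gp begin

context
  fixes n :: nat and Us :: "nat \<Rightarrow> 'a set"
  assumes Oi: "\<And>i. i < n \<Longrightarrow> openin X (Us i)"
begin

lemma d_ide: assumes s: "s \<in> DO n Us" shows "Ide (DC n Us) s \<in> Arr (DC n Us)"
proof -
  have 1: "(\<lambda>i\<in>{..<n}. Ide (FF (Us i)) (fst s i)) \<in> PiE {..<n} (\<lambda>i. Arr (FF (Us i)))"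
    using dobjD(1)[OF s] Oi by (simp add: restrict_PiE_iff)
  have 2: "Comp (FF (Us i \<inter> Us j)) (snd s i j) (resA (Us i \<inter> Us j) (Us i) ((\<lambda>i\<in>{..<n}. Ide (FF (Us i)) (fst s i)) i))
       = Comp (FF (Us i \<inter> Us j)) (resA (Us i \<inter> Us j) (Us j) ((\<lambda>i\<in>{..<n}. Ide (FF (Us i)) (fst s i)) j)) (snd s i j)"
    if i: "i < n" and j: "j < n" for i j
    using dobjD[OF s i j] dobjD(1)[OF s j j] Oi[OF i] Oi[OF j] i j by simp
  show ?thesis unfolding DC_simps darr_iff using s 1 2 dobjD(1)[OF s] Oi by simp
qed

lemma d_comp: assumes e1: "(s,t,f) \<in> Arr (DC n Us)" and e2: "(t,u,g) \<in> Arr (DC n Us)"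
  shows "(s, u, \<lambda>i\<in>{..<n}. Comp (FF (Us i)) (g i) (f i)) \<in> Arr (DC n Us)"
proof -
  have 1: "(\<lambda>i\<in>{..<n}. Comp (FF (Us i)) (g i) (f i)) \<in> PiE {..<n} (\<lambda>i. Arr (FF (Us i)))"
    using darrD[OF e1] darrD[OF e2] Oi by (simp add: restrict_PiE_iff)
  have 2: "Comp (FF (Us i \<inter> Us j)) (snd u i j) (resA (Us i \<inter> Us j) (Us i) ((\<lambda>i\<in>{..<n}. Comp (FF (Us i)) (g i) (f i)) i))
       = Comp (FF (Us i \<inter> Us j)) (resA (Us i \<inter> Us j) (Us j) ((\<lambda>i\<in>{..<n}. Comp (FF (Us i)) (g i) (f i)) j)) (snd s i j)"
    if i: "i < n" and j: "j < n" for i j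
  proof -
    let ?A = "Us i \<inter> Us j"
    have OA: "openin X ?A" and OI: "openin X (Us i)" and OJ: "openin X (Us j)" using Oi i j by auto
    note f1 = darrD[OF e1 i j] and f2 = darrD[OF e1 j i]
    note g1 = darrD[OF e2 i j] and g2 = darrD[OF e2 j i]
    note so = dobjD[OF darrD(1)[OF e1 i j] i j] and to = dobjD[OF darrD(2)[OF e1 i j] i j]
      and uo = dobjD[OF darrD(2)[OF e2 i j] i j]
    have r1: "resA ?A (Us i) (Comp (FF (Us i)) (g i) (f i)) = Comp (FF ?A) (resA ?A (Us i) (g i)) (resA ?A (Us i) (f i))"
      using f1(1-6) g1(1-6) OA OI by simp
    have r2: "resA ?A (Us j) (Comp (FF (Us j)) (g j) (f j)) = Comp (FF ?A) (resA ?A (Us j) (g j)) (resA ?A (Us j) (f j))"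
      using f2(1-6) g2(1-6) OA OJ by simp
    have "Comp (FF ?A) (snd u i j) (Comp (FF ?A) (resA ?A (Us i) (g i)) (resA ?A (Us i) (f i)))
        = Comp (FF ?A) (Comp (FF ?A) (snd u i j) (resA ?A (Us i) (g i))) (resA ?A (Us i) (f i))"
      using f1(1-6) g1(1-6) uo OA OI by (simp add: cat_assoc)
    also have "\<dots> = Comp (FF ?A) (Comp (FF ?A) (resA ?A (Us j) (g j)) (snd t i j)) (resA ?A (Us i) (f i))"
      using g1(7) by simp
    also have "\<dots> = Comp (FF ?A) (resA ?A (Us j) (g j)) (Comp (FF ?A) (snd t i j) (resA ?A (Us i) (f i)))"
      using f1(1-6) g2(1-6) to OA OI OJ by (simp add: cat_assoc)
    also have "\<dots> = Comp (FF ?A) (resA ?A (Us j) (g j)) (Comp (FF ?A) (resA ?A (Us j) (f j)) (snd s i j))"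
      using f1(7) by simp
    also have "\<dots> = Comp (FF ?A) (Comp (FF ?A) (resA ?A (Us j) (g j)) (resA ?A (Us j) (f j))) (snd s i j)"
      using f2(1-6) g2(1-6) so OA OJ by (simp add: cat_assoc)
    finally show ?thesis using r1 r2 i j by simp
  qed
  have E1: "s \<in> DO n Us" "\<forall>i<n. Dom (FF (Us i)) (f i) = fst s i \<and> Cod (FF (Us i)) (f i) = fst t i"
    "\<forall>i<n. f i \<in> Arr (FF (Us i))"
    using e1 unfolding darr_iff by (auto simp: PiE_iff)
  have E2: "u \<in> DO n Us" "\<forall>i<n. Dom (FF (Us i)) (g i) = fst t i \<and> Cod (FF (Us i)) (g i) = fst u i"
    "\<forall>i<n. g i \<in> Arr (FF (Us i))"
    using e2 unfolding darr_iff by (auto simp: PiE_iff)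
  have 3: "\<forall>i<n. Dom (FF (Us i)) ((\<lambda>i\<in>{..<n}. Comp (FF (Us i)) (g i) (f i)) i) = fst s i \<and>
      Cod (FF (Us i)) ((\<lambda>i\<in>{..<n}. Comp (FF (Us i)) (g i) (f i)) i) = fst u i"
    using E1 E2 Oi by simp
  show ?thesis unfolding darr_iff using E1(1) E2(1) 1 2 3 by blast
qed

lemma darr_E: assumes e: "(s,t,f) \<in> Arr (DC n Us)"
  shows "s \<in> DO n Us" "t \<in> DO n Us" "f \<in> PiE {..<n} (\<lambda>i. Arr (FF (Us i)))"
    "\<forall>i<n. f i \<in> Arr (FF (Us i)) \<and> Dom (FF (Us i)) (f i) = fst s i \<and> Cod (FF (Us i)) (f i) = fst t i"
  using e unfolding darr_iff by (auto simp: PiE_iff)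

lemma d_idl: assumes e: "e \<in> Arr (DC n Us)" shows "Comp (DC n Us) (Ide (DC n Us) (Cod (DC n Us) e)) e = e"
proof -
  obtain s t f where ee: "e = (s,t,f)" by (cases e)
  note E = darr_E[OF e[unfolded ee]]
  have "(\<lambda>i\<in>{..<n}. Comp (FF (Us i)) ((\<lambda>i\<in>{..<n}. Ide (FF (Us i)) (fst t i)) i) (f i)) = (\<lambda>i\<in>{..<n}. f i)"
    by (rule restrict_ext) (use E(4) Oi in simp)
  also have "\<dots> = f" using E(3) by simp
  finally show ?thesis using ee by simp
qed

lemma d_idr: assumes e: "e \<in> Arr (DC n Us)" shows "Comp (DC n Us) e (Ide (DC n Us) (Dom (DC n Us) e)) = e"
proof -
  obtain s t f where ee: "e = (s,t,f)" by (cases e)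
  note E = darr_E[OF e[unfolded ee]]
  have "(\<lambda>i\<in>{..<n}. Comp (FF (Us i)) (f i) ((\<lambda>i\<in>{..<n}. Ide (FF (Us i)) (fst s i)) i)) = (\<lambda>i\<in>{..<n}. f i)"
    by (rule restrict_ext) (use E(4) Oi in simp)
  also have "\<dots> = f" using E(3) by simp
  finally show ?thesis using ee by simp
qed

lemma d_assoc: assumes e1: "e1 \<in> Arr (DC n Us)" and e2: "e2 \<in> Arr (DC n Us)" and e3: "e3 \<in> Arr (DC n Us)"
  and c12: "Cod (DC n Us) e1 = Dom (DC n Us) e2" and c23: "Cod (DC n Us) e2 = Dom (DC n Us) e3"
  shows "Comp (DC n Us) e3 (Comp (DC n Us) e2 e1) = Comp (DC n Us) (Comp (DC n Us) e3 e2) e1"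
proof -
  obtain s t f where ee1: "e1 = (s,t,f)" by (cases e1)
  obtain t' u g where ee2: "e2 = (t',u,g)" by (cases e2)
  obtain u' v h where ee3: "e3 = (u',v,h)" by (cases e3)
  have tt: "t' = t" and uu: "u' = u" using c12 c23 ee1 ee2 ee3 by auto
  note E1 = darr_E[OF e1[unfolded ee1]] and E2 = darr_E[OF e2[unfolded ee2 tt]] and E3 = darr_E[OF e3[unfolded ee3 uu]]
  have "(\<lambda>i\<in>{..<n}. Comp (FF (Us i)) (h i) ((\<lambda>i\<in>{..<n}. Comp (FF (Us i)) (g i) (f i)) i))
      = (\<lambda>i\<in>{..<n}. Comp (FF (Us i)) ((\<lambda>i\<in>{..<n}. Comp (FF (Us i)) (h i) (g i)) i) (f i))"
    by (rule restrict_ext) (use E1(4) E2(4) E3(4) Oi in \<open>simp add: cat_assoc\<close>)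
  thus ?thesis using ee1 ee2 ee3 tt uu by simp
qed

lemma d_inv: assumes e: "(s,t,f) \<in> Arr (DC n Us)"
  shows "is_inverse (DC n Us) (s,t,f) (t, s, \<lambda>i\<in>{..<n}. ginv (FF (Us i)) (f i))"
proof -
  note E = darr_E[OF e]
  have iv: "is_inverse (FF (Us i)) (f i) (ginv (FF (Us i)) (f i))" if i: "i < n" for i
    using ginv[OF grpd[OF Oi[OF i]]] E(4) i by blast
  have iv2: "ginv (FF (Us i)) (f i) \<in> Arr (FF (Us i)) \<and> Dom (FF (Us i)) (ginv (FF (Us i)) (f i)) = fst t i \<and>
     Cod (FF (Us i)) (ginv (FF (Us i)) (f i)) = fst s i" if i: "i < n" for i
    using inv_arr[OF iv[OF i]] inv_dom[OF iv[OF i]] inv_cod[OF iv[OF i]] E(4) i by simp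
  have 1: "(\<lambda>i\<in>{..<n}. ginv (FF (Us i)) (f i)) \<in> PiE {..<n} (\<lambda>i. Arr (FF (Us i)))"
    using iv2 by (simp add: restrict_PiE_iff)
  have 2: "Comp (FF (Us i \<inter> Us j)) (snd s i j) (resA (Us i \<inter> Us j) (Us i) ((\<lambda>i\<in>{..<n}. ginv (FF (Us i)) (f i)) i))
       = Comp (FF (Us i \<inter> Us j)) (resA (Us i \<inter> Us j) (Us j) ((\<lambda>i\<in>{..<n}. ginv (FF (Us i)) (f i)) j)) (snd t i j)"
    if i: "i < n" and j: "j < n" for i j
  proof -
    let ?A = "Us i \<inter> Us j"
    have OA: "openin X ?A" and OI: "openin X (Us i)" and OJ: "openin X (Us j)" using Oi i j by auto
    have sA: "?A \<subseteq> Us i" "?A \<subseteq> Us j" by auto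
    note F1 = resF[OF OA OI sA(1)] and F2 = resF[OF OA OJ sA(2)]
    have fi: "f i \<in> Arr (FF (Us i))" "Dom (FF (Us i)) (f i) = fst s i" "Cod (FF (Us i)) (f i) = fst t i" using E(4) i by auto
    have fj: "f j \<in> Arr (FF (Us j))" "Dom (FF (Us j)) (f j) = fst s j" "Cod (FF (Us j)) (f j) = fst t j" using E(4) j by auto
    note so = dobjD[OF E(1) i j] and to = dobjD[OF E(2) i j]
    have a: "is_inverse (FF ?A) (resA ?A (Us i) (f i)) (resA ?A (Us i) (ginv (FF (Us i)) (f i)))"
      using fun_inv[OF F1 catU[OF OI] fi(1) iv[OF i]] .
    have b: "is_inverse (FF ?A) (resA ?A (Us j) (f j)) (resA ?A (Us j) (ginv (FF (Us j)) (f j)))"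
      using fun_inv[OF F2 catU[OF OJ] fj(1) iv[OF j]] .
    have "Comp (FF ?A) (snd s i j) (resA ?A (Us i) (ginv (FF (Us i)) (f i))) =
          Comp (FF ?A) (resA ?A (Us j) (ginv (FF (Us j)) (f j))) (snd t i j)"
      by (rule conj_inv[OF catU[OF OA] a b]) (use fi fj so to OA OI OJ darrD(7)[OF e i j] in simp_all)
    thus ?thesis using i j by simp
  qed
  have e': "(t, s, \<lambda>i\<in>{..<n}. ginv (FF (Us i)) (f i)) \<in> Arr (DC n Us)"
    unfolding darr_iff using E(1) E(2) 1 2 iv2 by simp
  have 3: "(\<lambda>i\<in>{..<n}. Comp (FF (Us i)) ((\<lambda>i\<in>{..<n}. ginv (FF (Us i)) (f i)) i) (f i)) = (\<lambda>i\<in>{..<n}. Ide (FF (Us i)) (fst s i))"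
    by (rule restrict_ext) (use iv E(4) in \<open>simp add: inv_l\<close>)
  have 4: "(\<lambda>i\<in>{..<n}. Comp (FF (Us i)) (f i) ((\<lambda>i\<in>{..<n}. ginv (FF (Us i)) (f i)) i)) = (\<lambda>i\<in>{..<n}. Ide (FF (Us i)) (fst t i))"
    by (rule restrict_ext) (use iv E(4) in \<open>simp add: inv_r\<close>)
  show ?thesis unfolding is_inverse_def using e' 3 4 by simp
qed

lemma d_groupoid: "is_groupoid (DC n Us)"
proof -
  have c1: "\<forall>f\<in>Arr (DC n Us). Dom (DC n Us) f \<in> Obj (DC n Us) \<and> Cod (DC n Us) f \<in> Obj (DC n Us)"
  proof
    fix e assume e: "e \<in> Arr (DC n Us)"
    obtain s t f where ee: "e = (s,t,f)" by (cases e)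
    show "Dom (DC n Us) e \<in> Obj (DC n Us) \<and> Cod (DC n Us) e \<in> Obj (DC n Us)"
      using darr_E[OF e[unfolded ee]] ee by simp
  qed
  have c2: "\<forall>a\<in>Obj (DC n Us). Ide (DC n Us) a \<in> Arr (DC n Us) \<and> Dom (DC n Us) (Ide (DC n Us) a) = a \<and> Cod (DC n Us) (Ide (DC n Us) a) = a"
    using d_ide by simp
  have c3: "\<forall>f\<in>Arr (DC n Us). \<forall>g\<in>Arr (DC n Us). Cod (DC n Us) f = Dom (DC n Us) g \<longrightarrow>
        Comp (DC n Us) g f \<in> Arr (DC n Us) \<and> Dom (DC n Us) (Comp (DC n Us) g f) = Dom (DC n Us) f \<and> Cod (DC n Us) (Comp (DC n Us) g f) = Cod (DC n Us) g"
  proof (intro ballI impI)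
    fix e1 e2 assume e1: "e1 \<in> Arr (DC n Us)" and e2: "e2 \<in> Arr (DC n Us)" and c: "Cod (DC n Us) e1 = Dom (DC n Us) e2"
    obtain s t f where ee1: "e1 = (s,t,f)" by (cases e1)
    obtain t' u g where ee2: "e2 = (t',u,g)" by (cases e2)
    have tt: "t' = t" using c ee1 ee2 by simp
    show "Comp (DC n Us) e2 e1 \<in> Arr (DC n Us) \<and> Dom (DC n Us) (Comp (DC n Us) e2 e1) = Dom (DC n Us) e1 \<and> Cod (DC n Us) (Comp (DC n Us) e2 e1) = Cod (DC n Us) e2"
      using d_comp[OF e1[unfolded ee1] e2[unfolded ee2 tt]] ee1 ee2 tt by simp
  qed
  have c4: "\<forall>f\<in>Arr (DC n Us). Comp (DC n Us) (Ide (DC n Us) (Cod (DC n Us) f)) f = f \<and> Comp (DC n Us) f (Ide (DC n Us) (Dom (DC n Us) f)) = f"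
    using d_idl d_idr by blast
  have c5: "\<forall>f\<in>Arr (DC n Us). \<forall>g\<in>Arr (DC n Us). \<forall>h\<in>Arr (DC n Us). Cod (DC n Us) f = Dom (DC n Us) g \<longrightarrow> Cod (DC n Us) g = Dom (DC n Us) h \<longrightarrow>
        Comp (DC n Us) h (Comp (DC n Us) g f) = Comp (DC n Us) (Comp (DC n Us) h g) f"
    using d_assoc by blast
  have c6: "\<forall>f\<in>Arr (DC n Us). \<exists>g. is_inverse (DC n Us) f g"
  proof
    fix e assume e: "e \<in> Arr (DC n Us)"
    obtain s t f where ee: "e = (s,t,f)" by (cases e)
    show "\<exists>g. is_inverse (DC n Us) e g" using d_inv[OF e[unfolded ee]] ee by blast
  qed
  show ?thesis unfolding is_groupoid_def is_category_def
    apply (intro conjI)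
    apply (fact c1) apply (fact c2) apply (fact c3) apply (fact c4) apply (fact c5) apply (fact c6)
    done
qed

end
end

context gp begin

abbreviation "DFo n U Us \<equiv> descent_functor_obj FF resO n U Us"
abbreviation "DFa n U Us \<equiv> (\<lambda>f. (descent_functor_obj FF resO n U Us (Dom (FF U) f),
                descent_functor_obj FF resO n U Us (Cod (FF U) f),
                (\<lambda>i\<in>{..<n}. resA (Us i) U f)))"

lemma dfo_fst[simp]: "fst (DFo n U Us x) = (\<lambda>i\<in>{..<n}. resO (Us i) U x)"
  by (simp add: descent_functor_obj_def)
lemma dfo_snd[simp]: "snd (DFo n U Us x) = (\<lambda>i\<in>{..<n}. \<lambda>j\<in>{..<n}.
         Ide (FF (Us i \<inter> Us j)) (resO (Us i \<inter> Us j) (Us i) (resO (Us i) U x)))"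
  by (simp add: descent_functor_obj_def)
lemma dfo_pair: "DFo n U Us x = (fst (DFo n U Us x), snd (DFo n U Us x))" by (simp only: prod.collapse)

context
  fixes n U Us
  assumes c: "open_cover X U n Us"
begin

lemma OU: "openin X U" using c cover_openU by blast
lemma Oi: "i < n \<Longrightarrow> openin X (Us i)" using c cover_open by blast
lemma Si: "i < n \<Longrightarrow> Us i \<subseteq> U" using c cover_sub by blast

lemma compat_id:
  assumes h: "\<And>i. i < n \<Longrightarrow> h i \<in> Arr (FF (Us i)) \<and> Dom (FF (Us i)) (h i) = resO (Us i) U a \<and> Cod (FF (Us i)) (h i) = resO (Us i) U a'"
    and a: "a \<in> Obj (FF U)" and a': "a' \<in> Obj (FF U)" and i: "i < n" and j: "j < n"
  shows "Comp (FF (Us i \<inter> Us j)) (snd (DFo n U Us a') i j) (resA (Us i \<inter> Us j) (Us i) (h i))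
       = Comp (FF (Us i \<inter> Us j)) (resA (Us i \<inter> Us j) (Us j) (h j)) (snd (DFo n U Us a) i j)
     \<longleftrightarrow> resA (Us i \<inter> Us j) (Us i) (h i) = resA (Us i \<inter> Us j) (Us j) (h j)"
  using h[OF i] h[OF j] a a' i j Oi[OF i] Oi[OF j] Si[OF i] Si[OF j] OU by simp

lemma dfo_obj: assumes x: "x \<in> Obj (FF U)" shows "DFo n U Us x \<in> DO n Us"
proof -
  have 1: "(\<lambda>i\<in>{..<n}. resO (Us i) U x) \<in> PiE {..<n} (\<lambda>i. Obj (FF (Us i)))"
    using x OU Oi Si by (simp add: restrict_PiE_iff)
  have 2: "(\<lambda>i\<in>{..<n}. \<lambda>j\<in>{..<n}. Ide (FF (Us i \<inter> Us j)) (resO (Us i \<inter> Us j) (Us i) (resO (Us i) U x)))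
      \<in> PiE {..<n} (\<lambda>i. PiE {..<n} (\<lambda>j. Arr (FF (Us i \<inter> Us j))))"
    using x OU Oi Si by (simp add: restrict_PiE_iff)
  have 3: "Dom (FF (Us i \<inter> Us j)) (Ide (FF (Us i \<inter> Us j)) (resO (Us i \<inter> Us j) (Us i) (resO (Us i) U x))) = resO (Us i \<inter> Us j) (Us i) (resO (Us i) U x) \<and>
           Cod (FF (Us i \<inter> Us j)) (Ide (FF (Us i \<inter> Us j)) (resO (Us i \<inter> Us j) (Us i) (resO (Us i) U x))) = resO (Us i \<inter> Us j) (Us j) (resO (Us j) U x)"
    if i: "i < n" and j: "j < n" for i j
    using x OU Oi[OF i] Oi[OF j] Si[OF i] Si[OF j] by simp
  have 4: "Comp (FF (Us i \<inter> Us j \<inter> Us k))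
             (resA (Us i \<inter> Us j \<inter> Us k) (Us j \<inter> Us k) (Ide (FF (Us j \<inter> Us k)) (resO (Us j \<inter> Us k) (Us j) (resO (Us j) U x))))
             (resA (Us i \<inter> Us j \<inter> Us k) (Us i \<inter> Us j) (Ide (FF (Us i \<inter> Us j)) (resO (Us i \<inter> Us j) (Us i) (resO (Us i) U x))))
           = resA (Us i \<inter> Us j \<inter> Us k) (Us i \<inter> Us k) (Ide (FF (Us i \<inter> Us k)) (resO (Us i \<inter> Us k) (Us i) (resO (Us i) U x)))"
    if i: "i < n" and j: "j < n" and k: "k < n" for i j k
    using x OU Oi[OF i] Oi[OF j] Oi[OF k] Si[OF i] Si[OF j] Si[OF k] by simp
  show ?thesis apply (subst dfo_pair) unfolding dobj_iff dfo_fst dfo_snd using 1 2 3 4 by simp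
qed

lemma d_functor: "is_functor (FF U) (DC n Us) (DFo n U Us) (DFa n U Us)"
proof -
  have a: "DFa n U Us f \<in> Arr (DC n Us)" if f: "f \<in> Arr (FF U)" for f
  proof -
    have d: "Dom (FF U) f \<in> Obj (FF U)" "Cod (FF U) f \<in> Obj (FF U)" using f OU by auto
    have h: "\<And>i. i < n \<Longrightarrow> resA (Us i) U f \<in> Arr (FF (Us i)) \<and> Dom (FF (Us i)) (resA (Us i) U f) = resO (Us i) U (Dom (FF U) f) \<and>
        Cod (FF (Us i)) (resA (Us i) U f) = resO (Us i) U (Cod (FF U) f)"
      using f OU Oi Si by simp
    have 2: "Comp (FF (Us i \<inter> Us j)) (snd (DFo n U Us (Cod (FF U) f)) i j) (resA (Us i \<inter> Us j) (Us i) ((\<lambda>i\<in>{..<n}. resA (Us i) U f) i))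
       = Comp (FF (Us i \<inter> Us j)) (resA (Us i \<inter> Us j) (Us j) ((\<lambda>i\<in>{..<n}. resA (Us i) U f) j)) (snd (DFo n U Us (Dom (FF U) f)) i j)"
      if i: "i < n" and j: "j < n" for i j
    proof -
      have "resA (Us i \<inter> Us j) (Us i) (resA (Us i) U f) = resA (Us i \<inter> Us j) (Us j) (resA (Us j) U f)"
        using f OU Oi[OF i] Oi[OF j] Si[OF i] Si[OF j] by simp
      thus ?thesis using compat_id[OF h d i j] i j by simp
    qed
    have 1: "(\<lambda>i\<in>{..<n}. resA (Us i) U f) \<in> PiE {..<n} (\<lambda>i. Arr (FF (Us i)))"
      using h by (simp add: restrict_PiE_iff)
    show ?thesis unfolding darr_iff using dfo_obj d 1 2 h by simp
  qed
  have i: "DFa n U Us (Ide (FF U) x) = Ide (DC n Us) (DFo n U Us x)" if x: "x \<in> Obj (FF U)" for x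
  proof -
    have "(\<lambda>i\<in>{..<n}. resA (Us i) U (Ide (FF U) x)) = (\<lambda>i\<in>{..<n}. Ide (FF (Us i)) (fst (DFo n U Us x) i))"
      by (rule restrict_ext) (use x OU Oi Si in simp)
    thus ?thesis using x OU by simp
  qed
  have cp: "DFa n U Us (Comp (FF U) g f) = Comp (DC n Us) (DFa n U Us g) (DFa n U Us f)"
    if f: "f \<in> Arr (FF U)" and g: "g \<in> Arr (FF U)" and fg: "Cod (FF U) f = Dom (FF U) g" for f g
  proof -
    have "(\<lambda>i\<in>{..<n}. resA (Us i) U (Comp (FF U) g f)) = (\<lambda>i\<in>{..<n}. Comp (FF (Us i)) ((\<lambda>i\<in>{..<n}. resA (Us i) U g) i) ((\<lambda>i\<in>{..<n}. resA (Us i) U f) i))"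
      by (rule restrict_ext) (use f g fg OU Oi Si in simp)
    thus ?thesis using f g fg OU by simp
  qed
  show ?thesis unfolding is_functor_def using dfo_obj a i cp by simp
qed

end
end

context gp begin

definition hs_at :: "nat \<Rightarrow> 'a set \<Rightarrow> (nat \<Rightarrow> 'a set) \<Rightarrow> bool" where
  "hs_at n U Us \<longleftrightarrow> (\<forall>x\<in>Obj (FF U). \<forall>y\<in>Obj (FF U).
     (\<forall>f\<in>Arr (FF U). \<forall>f'\<in>Arr (FF U). Dom (FF U) f = x \<longrightarrow> Cod (FF U) f = y \<longrightarrow> Dom (FF U) f' = x \<longrightarrow> Cod (FF U) f' = y \<longrightarrow>
        (\<forall>i<n. resA (Us i) U f = resA (Us i) U f') \<longrightarrow> f = f') \<and>
     (\<forall>s. (\<forall>i<n. s i \<in> Arr (FF (Us i)) \<and> Dom (FF (Us i)) (s i) = resO (Us i) U x \<and> Cod (FF (Us i)) (s i) = resO (Us i) U y) \<longrightarrow>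
        (\<forall>i<n. \<forall>j<n. resA (Us i \<inter> Us j) (Us i) (s i) = resA (Us i \<inter> Us j) (Us j) (s j)) \<longrightarrow>
        (\<exists>f\<in>Arr (FF U). Dom (FF U) f = x \<and> Cod (FF U) f = y \<and> (\<forall>i<n. resA (Us i) U f = s i))))"

definition es_at :: "nat \<Rightarrow> 'a set \<Rightarrow> (nat \<Rightarrow> 'a set) \<Rightarrow> bool" where
  "es_at n U Us \<longleftrightarrow> (\<forall>s\<in>DO n Us. \<exists>a\<in>Obj (FF U). \<exists>g.
     (\<forall>i<n. g i \<in> Arr (FF (Us i)) \<and> Dom (FF (Us i)) (g i) = resO (Us i) U a \<and> Cod (FF (Us i)) (g i) = fst s i) \<and>
     (\<forall>i<n. \<forall>j<n. Comp (FF (Us i \<inter> Us j)) (snd s i j) (resA (Us i \<inter> Us j) (Us i) (g i)) = resA (Us i \<inter> Us j) (Us j) (g j)))"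

lemma hsD1: assumes hs: "hs_at n U Us" and x: "x \<in> Obj (FF U)" and y: "y \<in> Obj (FF U)"
  and f: "f \<in> Arr (FF U)" and f': "f' \<in> Arr (FF U)" and a1: "Dom (FF U) f = x" and a2: "Cod (FF U) f = y"
  and a3: "Dom (FF U) f' = x" and a4: "Cod (FF U) f' = y" and ag: "\<forall>i<n. resA (Us i) U f = resA (Us i) U f'"
  shows "f = f'"
proof -
  have H: "\<forall>f\<in>Arr (FF U). \<forall>f'\<in>Arr (FF U). Dom (FF U) f = x \<longrightarrow> Cod (FF U) f = y \<longrightarrow> Dom (FF U) f' = x \<longrightarrow> Cod (FF U) f' = y \<longrightarrow>
        (\<forall>i<n. resA (Us i) U f = resA (Us i) U f') \<longrightarrow> f = f'"
    using bspec[OF bspec[OF hs[unfolded hs_at_def] x] y] by (rule conjunct1)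
  show ?thesis using H[rule_format (no_asm), OF f f' a1 a2 a3 a4 ag] .
qed

lemma hsD2: assumes hs: "hs_at n U Us" and x: "x \<in> Obj (FF U)" and y: "y \<in> Obj (FF U)"
  and s: "\<forall>i<n. s i \<in> Arr (FF (Us i)) \<and> Dom (FF (Us i)) (s i) = resO (Us i) U x \<and> Cod (FF (Us i)) (s i) = resO (Us i) U y"
  and sc: "\<forall>i<n. \<forall>j<n. resA (Us i \<inter> Us j) (Us i) (s i) = resA (Us i \<inter> Us j) (Us j) (s j)"
  shows "\<exists>f\<in>Arr (FF U). Dom (FF U) f = x \<and> Cod (FF U) f = y \<and> (\<forall>i<n. resA (Us i) U f = s i)"
proof -
  have H: "\<forall>s. (\<forall>i<n. s i \<in> Arr (FF (Us i)) \<and> Dom (FF (Us i)) (s i) = resO (Us i) U x \<and> Cod (FF (Us i)) (s i) = resO (Us i) U y) \<longrightarrow>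
        (\<forall>i<n. \<forall>j<n. resA (Us i \<inter> Us j) (Us i) (s i) = resA (Us i \<inter> Us j) (Us j) (s j)) \<longrightarrow>
        (\<exists>f\<in>Arr (FF U). Dom (FF U) f = x \<and> Cod (FF U) f = y \<and> (\<forall>i<n. resA (Us i) U f = s i))"
    using bspec[OF bspec[OF hs[unfolded hs_at_def] x] y] by (rule conjunct2)
  show ?thesis using H[rule_format (no_asm), OF s sc] .
qed

lemma esD: assumes es: "es_at n U Us" and s: "s \<in> DO n Us"
  shows "\<exists>a\<in>Obj (FF U). \<exists>g.
     (\<forall>i<n. g i \<in> Arr (FF (Us i)) \<and> Dom (FF (Us i)) (g i) = resO (Us i) U a \<and> Cod (FF (Us i)) (g i) = fst s i) \<and>
     (\<forall>i<n. \<forall>j<n. Comp (FF (Us i \<inter> Us j)) (snd s i j) (resA (Us i \<inter> Us j) (Us i) (g i)) = resA (Us i \<inter> Us j) (Us j) (g j))"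
  using bspec[OF es[unfolded es_at_def] s] .

context
  fixes n U Us
  assumes c: "open_cover X U n Us"
begin

lemma hs_of_ff: assumes fF: "faithful (FF U) (DFa n U Us)" and fu: "full (FF U) (DC n Us) (DFo n U Us) (DFa n U Us)"
  shows "hs_at n U Us"
  unfolding hs_at_def
proof (intro ballI conjI allI impI)
  fix x y assume x: "x \<in> Obj (FF U)" and y: "y \<in> Obj (FF U)"
  {
    fix f f' assume f: "f \<in> Arr (FF U)" and f': "f' \<in> Arr (FF U)" and fx: "Dom (FF U) f = x" and fy: "Cod (FF U) f = y"
      and f'x: "Dom (FF U) f' = x" and f'y: "Cod (FF U) f' = y" and ag: "\<forall>i<n. resA (Us i) U f = resA (Us i) U f'"
    have "(\<lambda>i\<in>{..<n}. resA (Us i) U f) = (\<lambda>i\<in>{..<n}. resA (Us i) U f')" by (rule restrict_ext) (simp add: ag)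
    hence eq: "DFa n U Us f = DFa n U Us f'" using fx fy f'x f'y by simp
    show "f = f'" by (rule faithfulD[OF fF f f' _ _ eq]) (simp_all add: fx fy f'x f'y)
  }
  {
    fix s assume s: "\<forall>i<n. s i \<in> Arr (FF (Us i)) \<and> Dom (FF (Us i)) (s i) = resO (Us i) U x \<and> Cod (FF (Us i)) (s i) = resO (Us i) U y"
      and sc: "\<forall>i<n. \<forall>j<n. resA (Us i \<inter> Us j) (Us i) (s i) = resA (Us i \<inter> Us j) (Us j) (s j)"
    have 1: "restrict s {..<n} \<in> PiE {..<n} (\<lambda>i. Arr (FF (Us i)))" using s by (simp add: restrict_PiE_iff)
    have 2: "Comp (FF (Us i \<inter> Us j)) (snd (DFo n U Us y) i j) (resA (Us i \<inter> Us j) (Us i) (restrict s {..<n} i)) =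
        Comp (FF (Us i \<inter> Us j)) (resA (Us i \<inter> Us j) (Us j) (restrict s {..<n} j)) (snd (DFo n U Us x) i j)"
      if i: "i < n" and j: "j < n" for i j
    proof -
      have hh: "\<And>i. i < n \<Longrightarrow> s i \<in> Arr (FF (Us i)) \<and> Dom (FF (Us i)) (s i) = resO (Us i) U x \<and> Cod (FF (Us i)) (s i) = resO (Us i) U y"
        using s by blast
      have r: "restrict s {..<n} i = s i" "restrict s {..<n} j = s j" using i j by auto
      show ?thesis unfolding r using compat_id[OF c hh x y i j] sc[rule_format, OF i j] by (rule iffD2)
    qed
    have g: "(DFo n U Us x, DFo n U Us y, restrict s {..<n}) \<in> Arr (DC n Us)"
      unfolding darr_iff using dfo_obj[OF c x] dfo_obj[OF c y] 1 2 s by simp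
    obtain f where f: "f \<in> Arr (FF U)" "Dom (FF U) f = x" "Cod (FF U) f = y"
      and e: "DFa n U Us f = (DFo n U Us x, DFo n U Us y, restrict s {..<n})"
      using fu x y g unfolding full_def by fastforce
    have "\<forall>i<n. resA (Us i) U f = s i"
    proof (intro allI impI)
      fix i assume i: "i < n"
      have "(\<lambda>i\<in>{..<n}. resA (Us i) U f) = restrict s {..<n}" using e by simp
      from fun_cong[OF this, of i] show "resA (Us i) U f = s i" using i by simp
    qed
    thus "\<exists>f\<in>Arr (FF U). Dom (FF U) f = x \<and> Cod (FF U) f = y \<and> (\<forall>i<n. resA (Us i) U f = s i)" using f by blast
  }
qed

lemma ff_of_hs: assumes hs: "hs_at n U Us"
  shows "faithful (FF U) (DFa n U Us) \<and> full (FF U) (DC n Us) (DFo n U Us) (DFa n U Us)"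
proof
  show "faithful (FF U) (DFa n U Us)" unfolding faithful_def
  proof (intro ballI impI)
    fix f f' assume f: "f \<in> Arr (FF U)" and f': "f' \<in> Arr (FF U)" and d: "Dom (FF U) f = Dom (FF U) f'"
      and cd: "Cod (FF U) f = Cod (FF U) f'" and e: "DFa n U Us f = DFa n U Us f'"
    have e3: "(\<lambda>i\<in>{..<n}. resA (Us i) U f) = (\<lambda>i\<in>{..<n}. resA (Us i) U f')" using e by simp
    have ag: "\<forall>i<n. resA (Us i) U f = resA (Us i) U f'"
    proof (intro allI impI)
      fix i assume i: "i < n" from fun_cong[OF e3, of i] show "resA (Us i) U f = resA (Us i) U f'" using i by simp
    qed
    have x: "Dom (FF U) f \<in> Obj (FF U)" and y: "Cod (FF U) f \<in> Obj (FF U)" using f OU[OF c] by auto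
    show "f = f'" by (rule hsD1[OF hs x y f f' refl refl d[symmetric] cd[symmetric] ag])
  qed
  show "full (FF U) (DC n Us) (DFo n U Us) (DFa n U Us)" unfolding full_def
  proof (intro ballI impI)
    fix a a' e assume a: "a \<in> Obj (FF U)" and a': "a' \<in> Obj (FF U)" and e: "e \<in> Arr (DC n Us)"
      and ed: "Dom (DC n Us) e = DFo n U Us a" and ec: "Cod (DC n Us) e = DFo n U Us a'"
    obtain p q h where pqh: "e = (p,q,h)" by (cases e)
    have p: "p = DFo n U Us a" and q: "q = DFo n U Us a'" using ed ec pqh by auto
    have e': "(DFo n U Us a, DFo n U Us a', h) \<in> Arr (DC n Us)" using e pqh p q by simp
    note E = darr_E[OF Oi[OF c] e']
    have hh: "\<And>i. i < n \<Longrightarrow> h i \<in> Arr (FF (Us i)) \<and> Dom (FF (Us i)) (h i) = resO (Us i) U a \<and> Cod (FF (Us i)) (h i) = resO (Us i) U a'"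
      using E(4) by simp
    have hc: "\<forall>i<n. \<forall>j<n. resA (Us i \<inter> Us j) (Us i) (h i) = resA (Us i \<inter> Us j) (Us j) (h j)"
    proof (intro allI impI)
      fix i j assume i: "i < n" and j: "j < n"
      show "resA (Us i \<inter> Us j) (Us i) (h i) = resA (Us i \<inter> Us j) (Us j) (h j)"
      proof -
        have d7: "Comp (FF (Us i \<inter> Us j)) (snd (DFo n U Us a') i j) (resA (Us i \<inter> Us j) (Us i) (h i))
          = Comp (FF (Us i \<inter> Us j)) (resA (Us i \<inter> Us j) (Us j) (h j)) (snd (DFo n U Us a) i j)"
          using darrD(7)[OF e' i j] .
        have ci: "(Comp (FF (Us i \<inter> Us j)) (snd (DFo n U Us a') i j) (resA (Us i \<inter> Us j) (Us i) (h i))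
          = Comp (FF (Us i \<inter> Us j)) (resA (Us i \<inter> Us j) (Us j) (h j)) (snd (DFo n U Us a) i j))
          = (resA (Us i \<inter> Us j) (Us i) (h i) = resA (Us i \<inter> Us j) (Us j) (h j))"
          by (rule compat_id[OF c hh a a' i j])
        show ?thesis using d7 ci by blast
      qed
    qed
    obtain f where f: "f \<in> Arr (FF U)" "Dom (FF U) f = a" "Cod (FF U) f = a'" and fr: "\<forall>i<n. resA (Us i) U f = h i"
      using hsD2[OF hs a a' _ hc] hh by blast
    have "(\<lambda>i\<in>{..<n}. resA (Us i) U f) = restrict h {..<n}" by (rule restrict_ext) (simp add: fr)
    also have "\<dots> = h" using E(3) by simp
    finally have "DFa n U Us f = e" using pqh p q f by simp
    thus "\<exists>f\<in>Arr (FF U). Dom (FF U) f = a \<and> Cod (FF U) f = a' \<and> DFa n U Us f = e" using f by blast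
  qed
qed

lemma es_of_esurj: assumes es: "esurj (FF U) (DC n Us) (DFo n U Us)" shows "es_at n U Us"
  unfolding es_at_def
proof
  fix s assume s: "s \<in> DO n Us"
  obtain a e where a: "a \<in> Obj (FF U)" and e: "e \<in> Arr (DC n Us)" and ed: "Dom (DC n Us) e = DFo n U Us a"
    and ec: "Cod (DC n Us) e = s" using es s unfolding esurj_def by auto
  obtain p q g where pqg: "e = (p,q,g)" by (cases e)
  have e': "(DFo n U Us a, s, g) \<in> Arr (DC n Us)" using e pqg ed ec by simp
  note E = darr_E[OF Oi[OF c] e']
  have 1: "\<forall>i<n. g i \<in> Arr (FF (Us i)) \<and> Dom (FF (Us i)) (g i) = resO (Us i) U a \<and> Cod (FF (Us i)) (g i) = fst s i"
    using E(4) by simp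
  have 2: "\<forall>i<n. \<forall>j<n. Comp (FF (Us i \<inter> Us j)) (snd s i j) (resA (Us i \<inter> Us j) (Us i) (g i)) = resA (Us i \<inter> Us j) (Us j) (g j)"
  proof (intro allI impI)
    fix i j assume i: "i < n" and j: "j < n"
    have "Comp (FF (Us i \<inter> Us j)) (resA (Us i \<inter> Us j) (Us j) (g j)) (snd (DFo n U Us a) i j) = resA (Us i \<inter> Us j) (Us j) (g j)"
      using 1 a i j Oi[OF c i] Oi[OF c j] Si[OF c i] Si[OF c j] OU[OF c] by simp
    thus "Comp (FF (Us i \<inter> Us j)) (snd s i j) (resA (Us i \<inter> Us j) (Us i) (g i)) = resA (Us i \<inter> Us j) (Us j) (g j)"
      using darrD(7)[OF e' i j] by simp
  qed
  show "\<exists>a\<in>Obj (FF U). \<exists>g. (\<forall>i<n. g i \<in> Arr (FF (Us i)) \<and> Dom (FF (Us i)) (g i) = resO (Us i) U a \<and> Cod (FF (Us i)) (g i) = fst s i) \<and>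
     (\<forall>i<n. \<forall>j<n. Comp (FF (Us i \<inter> Us j)) (snd s i j) (resA (Us i \<inter> Us j) (Us i) (g i)) = resA (Us i \<inter> Us j) (Us j) (g j))"
    using a 1 2 by blast
qed

lemma esurj_of_es: assumes es: "es_at n U Us" shows "esurj (FF U) (DC n Us) (DFo n U Us)"
  unfolding esurj_def
proof
  fix s assume s: "s \<in> Obj (DC n Us)"
  hence s': "s \<in> DO n Us" by simp
  obtain a g where a: "a \<in> Obj (FF U)"
    and g1: "\<forall>i<n. g i \<in> Arr (FF (Us i)) \<and> Dom (FF (Us i)) (g i) = resO (Us i) U a \<and> Cod (FF (Us i)) (g i) = fst s i"
    and g2: "\<forall>i<n. \<forall>j<n. Comp (FF (Us i \<inter> Us j)) (snd s i j) (resA (Us i \<inter> Us j) (Us i) (g i)) = resA (Us i \<inter> Us j) (Us j) (g j)"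
    using esD[OF es s'] by blast
  have 1: "restrict g {..<n} \<in> PiE {..<n} (\<lambda>i. Arr (FF (Us i)))" using g1 by (simp add: restrict_PiE_iff)
  have 2: "Comp (FF (Us i \<inter> Us j)) (snd s i j) (resA (Us i \<inter> Us j) (Us i) (restrict g {..<n} i)) =
        Comp (FF (Us i \<inter> Us j)) (resA (Us i \<inter> Us j) (Us j) (restrict g {..<n} j)) (snd (DFo n U Us a) i j)"
    if i: "i < n" and j: "j < n" for i j
  proof -
    have "Comp (FF (Us i \<inter> Us j)) (resA (Us i \<inter> Us j) (Us j) (g j)) (snd (DFo n U Us a) i j) = resA (Us i \<inter> Us j) (Us j) (g j)"
      using g1 a i j Oi[OF c i] Oi[OF c j] Si[OF c i] Si[OF c j] OU[OF c] by simp
    thus ?thesis using g2 i j by simp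
  qed
  have e: "(DFo n U Us a, s, restrict g {..<n}) \<in> Arr (DC n Us)"
    unfolding darr_iff using dfo_obj[OF c a] s' 1 2 g1 by simp
  show "\<exists>a\<in>Obj (FF U). \<exists>e\<in>Arr (DC n Us). Dom (DC n Us) e = DFo n U Us a \<and> Cod (DC n Us) e = s"
    using a e by force
qed

lemma st_hs_es: assumes st: "st_cond X FF resO resA n" shows "hs_at n U Us \<and> es_at n U Us"
proof -
  have eq: "is_cat_equiv (FF U) (DC n Us) (DFo n U Us) (DFa n U Us)"
    using st c unfolding st_cond_def by blast
  have P: "faithful (FF U) (DFa n U Us) \<and> full (FF U) (DC n Us) (DFo n U Us) (DFa n U Us) \<and> esurj (FF U) (DC n Us) (DFo n U Us)"
    using equiv_props[OF catU[OF OU[OF c]] grp_cat[OF d_groupoid[OF Oi[OF c]]] eq] .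
  show ?thesis using hs_of_ff es_of_esurj P by blast
qed

lemma hs_es_equiv: assumes "hs_at n U Us" "es_at n U Us"
  shows "is_cat_equiv (FF U) (DC n Us) (DFo n U Us) (DFa n U Us)"
proof -
  have P: "faithful (FF U) (DFa n U Us) \<and> full (FF U) (DC n Us) (DFo n U Us) (DFa n U Us)"
    using ff_of_hs assms(1) by blast
  show ?thesis using props_equiv[OF grpd[OF OU[OF c]] d_groupoid[OF Oi[OF c]] d_functor[OF c]] P esurj_of_es[OF assms(2)] by blast
qed

end

lemma hs_es_st: assumes "\<And>U Us. open_cover X U n Us \<Longrightarrow> hs_at n U Us \<and> es_at n U Us"
  shows "st_cond X FF resO resA n"
  unfolding st_cond_def using hs_es_equiv assms by blast

end

context gp begin

lemma sps_hom: assumes OU: "openin X U0" and x: "x \<in> Obj (FF U0)" and y: "y \<in> Obj (FF U0)"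
  shows "sps (\<lambda>V. openin X V \<and> V \<subseteq> U0)
     (\<lambda>V. {f \<in> Arr (FF V). Dom (FF V) f = resO V U0 x \<and> Cod (FF V) f = resO V U0 y}) resA"
  unfolding sps_def
proof (intro conjI)
  show "\<forall>W. openin X W \<and> W \<subseteq> U0 \<longrightarrow> (\<forall>f\<in>{f \<in> Arr (FF W). Dom (FF W) f = resO W U0 x \<and> Cod (FF W) f = resO W U0 y}. resA W W f = f)"
    by simp
  show "\<forall>V W. openin X V \<and> V \<subseteq> U0 \<longrightarrow> openin X W \<and> W \<subseteq> U0 \<longrightarrow> V \<subseteq> W \<longrightarrow>
    (\<forall>f\<in>{f \<in> Arr (FF W). Dom (FF W) f = resO W U0 x \<and> Cod (FF W) f = resO W U0 y}.
        resA V W f \<in> {f \<in> Arr (FF V). Dom (FF V) f = resO V U0 x \<and> Cod (FF V) f = resO V U0 y})"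
  proof (intro allI impI ballI)
    fix V W f assume V: "openin X V \<and> V \<subseteq> U0" and W: "openin X W \<and> W \<subseteq> U0" and VW: "V \<subseteq> W"
      and f: "f \<in> {f \<in> Arr (FF W). Dom (FF W) f = resO W U0 x \<and> Cod (FF W) f = resO W U0 y}"
    show "resA V W f \<in> {f \<in> Arr (FF V). Dom (FF V) f = resO V U0 x \<and> Cod (FF V) f = resO V U0 y}"
      using V W VW f OU x y by simp
  qed
  show "\<forall>V W Z. openin X V \<and> V \<subseteq> U0 \<longrightarrow> openin X W \<and> W \<subseteq> U0 \<longrightarrow> openin X Z \<and> Z \<subseteq> U0 \<longrightarrow> V \<subseteq> W \<longrightarrow> W \<subseteq> Z \<longrightarrow>
    (\<forall>f\<in>{f \<in> Arr (FF Z). Dom (FF Z) f = resO Z U0 x \<and> Cod (FF Z) f = resO Z U0 y}. resA V W (resA W Z f) = resA V Z f)"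
    by simp
  show "\<forall>A B. openin X A \<and> A \<subseteq> U0 \<longrightarrow> openin X B \<and> B \<subseteq> U0 \<longrightarrow>
     (openin X (A \<inter> B) \<and> A \<inter> B \<subseteq> U0) \<and> openin X (A \<union> B) \<and> A \<union> B \<subseteq> U0"
    by auto
qed

lemma glue2_hom: assumes hs2: "\<And>V Vs. open_cover X V 2 Vs \<Longrightarrow> hs_at 2 V Vs"
  and OU: "openin X U0" and x: "x \<in> Obj (FF U0)" and y: "y \<in> Obj (FF U0)"
  shows "glue (\<lambda>V. openin X V \<and> V \<subseteq> U0)
     (\<lambda>V. {f \<in> Arr (FF V). Dom (FF V) f = resO V U0 x \<and> Cod (FF V) f = resO V U0 y}) resA 2"
  unfolding glue_def
proof (intro allI impI conjI ballI)
  fix V and Vs :: "nat \<Rightarrow> 'a set" assume V: "openin X V \<and> V \<subseteq> U0" and Vi: "\<forall>i<2. openin X (Vs i) \<and> Vs i \<subseteq> U0" and cv: "(\<Union>i<2. Vs i) = V"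
  have c: "open_cover X V 2 Vs" unfolding open_cover_def using V Vi cv by blast
  have hs: "hs_at 2 V Vs" using hs2[OF c] .
  have x': "resO V U0 x \<in> Obj (FF V)" and y': "resO V U0 y \<in> Obj (FF V)" using V OU x y by auto
  have sub: "i < 2 \<Longrightarrow> Vs i \<subseteq> V" for i using cv by auto
  {
    fix f f' assume f: "f \<in> {f \<in> Arr (FF V). Dom (FF V) f = resO V U0 x \<and> Cod (FF V) f = resO V U0 y}"
      and f': "f' \<in> {f \<in> Arr (FF V). Dom (FF V) f = resO V U0 x \<and> Cod (FF V) f = resO V U0 y}"
      and ag: "\<forall>i<2. resA (Vs i) V f = resA (Vs i) V f'"
    show "f = f'" using hsD1[OF hs x' y' _ _ _ _ _ _ ag] f f' by blast
  }
  {
    fix s assume s: "\<forall>i<2. s i \<in> {f \<in> Arr (FF (Vs i)). Dom (FF (Vs i)) f = resO (Vs i) U0 x \<and> Cod (FF (Vs i)) f = resO (Vs i) U0 y}"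
      and sc: "\<forall>i<2. \<forall>j<2. resA (Vs i \<inter> Vs j) (Vs i) (s i) = resA (Vs i \<inter> Vs j) (Vs j) (s j)"
    have s': "\<forall>i<2. s i \<in> Arr (FF (Vs i)) \<and> Dom (FF (Vs i)) (s i) = resO (Vs i) V (resO V U0 x) \<and> Cod (FF (Vs i)) (s i) = resO (Vs i) V (resO V U0 y)"
    proof (intro allI impI)
      fix i :: nat assume i: "i < 2"
      show "s i \<in> Arr (FF (Vs i)) \<and> Dom (FF (Vs i)) (s i) = resO (Vs i) V (resO V U0 x) \<and> Cod (FF (Vs i)) (s i) = resO (Vs i) V (resO V U0 y)"
        using s i Vi V sub[OF i] x y OU by simp
    qed
    obtain f where f: "f \<in> Arr (FF V)" "Dom (FF V) f = resO V U0 x" "Cod (FF V) f = resO V U0 y" and fr: "\<forall>i<2. resA (Vs i) V f = s i"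
      using hsD2[OF hs x' y' s' sc] by blast
    show "\<exists>f\<in>{f \<in> Arr (FF V). Dom (FF V) f = resO V U0 x \<and> Cod (FF V) f = resO V U0 y}. \<forall>i<2. resA (Vs i) V f = s i"
      using f fr by blast
  }
qed

lemma hom_hs: assumes c: "open_cover X U n Us"
  and g: "\<And>x y. x \<in> Obj (FF U) \<Longrightarrow> y \<in> Obj (FF U) \<Longrightarrow> glue (\<lambda>V. openin X V \<and> V \<subseteq> U)
     (\<lambda>V. {f \<in> Arr (FF V). Dom (FF V) f = resO V U x \<and> Cod (FF V) f = resO V U y}) resA n"
  shows "hs_at n U Us"
  unfolding hs_at_def
proof (intro ballI conjI allI impI)
  fix x y assume x: "x \<in> Obj (FF U)" and y: "y \<in> Obj (FF U)"
  note G = g[OF x y]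
  have OU: "openin X U \<and> U \<subseteq> U" using OU[OF c] by simp
  have Oi: "\<And>i. i < n \<Longrightarrow> openin X (Us i) \<and> Us i \<subseteq> U" using Oi[OF c] Si[OF c] by blast
  have cv: "(\<Union>i<n. Us i) = U" using c unfolding open_cover_def by blast
  {
    fix f f' assume f: "f \<in> Arr (FF U)" and f': "f' \<in> Arr (FF U)" and a1: "Dom (FF U) f = x" and a2: "Cod (FF U) f = y"
      and a3: "Dom (FF U) f' = x" and a4: "Cod (FF U) f' = y" and ag: "\<forall>i<n. resA (Us i) U f = resA (Us i) U f'"
    show "f = f'"
      by (rule glueI1[OF G OU Oi cv]) (use f f' a1 a2 a3 a4 ag x y OU in auto)
  }
  {
    fix s assume s: "\<forall>i<n. s i \<in> Arr (FF (Us i)) \<and> Dom (FF (Us i)) (s i) = resO (Us i) U x \<and> Cod (FF (Us i)) (s i) = resO (Us i) U y"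
      and sc: "\<forall>i<n. \<forall>j<n. resA (Us i \<inter> Us j) (Us i) (s i) = resA (Us i \<inter> Us j) (Us j) (s j)"
    have "\<exists>f\<in>{f \<in> Arr (FF U). Dom (FF U) f = resO U U x \<and> Cod (FF U) f = resO U U y}. \<forall>i<n. resA (Us i) U f = s i"
      by (rule glueI2[OF G OU Oi cv]) (use s sc in auto)
    thus "\<exists>f\<in>Arr (FF U). Dom (FF U) f = x \<and> Cod (FF U) f = y \<and> (\<forall>i<n. resA (Us i) U f = s i)"
      using x y OU by auto
  }
qed

lemma hs_all: assumes hs2: "\<And>V Vs. open_cover X V 2 Vs \<Longrightarrow> hs_at 2 V Vs" and n: "n \<ge> 2" and c: "open_cover X U n Us"
  shows "hs_at n U Us"
proof (rule hom_hs[OF c])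
  fix x y assume x: "x \<in> Obj (FF U)" and y: "y \<in> Obj (FF U)"
  show "glue (\<lambda>V. openin X V \<and> V \<subseteq> U)
     (\<lambda>V. {f \<in> Arr (FF V). Dom (FF V) f = resO V U x \<and> Cod (FF V) f = resO V U y}) resA n"
    using glue_all[OF sps_hom[OF OU[OF c] x y] glue2_hom[OF hs2 OU[OF c] x y] n] .
qed

lemma phi_ii: assumes s: "s \<in> DO n Us" and i: "i < n" and Oi: "openin X (Us i)"
  shows "snd s i i = Ide (FF (Us i)) (fst s i)"
proof -
  have co: "Comp (FF (Us i)) (snd s i i) (snd s i i) = snd s i i"
    using dobj_cocycle[OF s i i i] dobjD[OF s i i] Oi by simp
  have d: "snd s i i \<in> Arr (FF (Us i))" "Dom (FF (Us i)) (snd s i i) = fst s i" "Cod (FF (Us i)) (snd s i i) = fst s i"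
    using dobjD[OF s i i] Oi by simp_all
  show ?thesis using idem_ide[OF grpd[OF Oi] d(1) _ co] d by simp
qed

lemma phi_inv: assumes s: "s \<in> DO n Us" and i: "i < n" and j: "j < n" and Oi: "openin X (Us i)" and Oj: "openin X (Us j)"
  shows "Comp (FF (Us i \<inter> Us j)) (snd s j i) (snd s i j) = Ide (FF (Us i \<inter> Us j)) (resO (Us i \<inter> Us j) (Us i) (fst s i))"
proof -
  have e1: "Us i \<inter> Us j \<inter> Us i = Us i \<inter> Us j" and e2: "Us j \<inter> Us i = Us i \<inter> Us j" by blast+
  have co: "Comp (FF (Us i \<inter> Us j)) (resA (Us i \<inter> Us j) (Us i \<inter> Us j) (snd s j i)) (resA (Us i \<inter> Us j) (Us i \<inter> Us j) (snd s i j))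
     = resA (Us i \<inter> Us j) (Us i) (snd s i i)"
    using dobj_cocycle[OF s i j i] unfolding e1 e2 by simp
  have a1: "snd s j i \<in> Arr (FF (Us i \<inter> Us j))" using dobjD(2)[OF s j i] unfolding e2 .
  have a2: "snd s i j \<in> Arr (FF (Us i \<inter> Us j))" using dobjD(2)[OF s i j] .
  show ?thesis using co a1 a2 phi_ii[OF s i Oi] dobjD(1)[OF s i i] Oi Oj by simp
qed

end

lemma all2: "(\<forall>i<(2::nat). P i) = (P 0 \<and> P 1)"
  by (auto simp: numeral_2_eq_2 less_Suc_eq)
lemma ball2: "(\<forall>i\<in>{..<(2::nat)}. P i) = (P 0 \<and> P 1)"
  by (auto simp: numeral_2_eq_2 less_Suc_eq)

context gp begin

lemma es_step:
  assumes hsn: "\<And>V Vs. open_cover X V n Vs \<Longrightarrow> hs_at n V Vs"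
    and es2: "\<And>V Vs. open_cover X V 2 Vs \<Longrightarrow> es_at 2 V Vs"
    and esn: "\<And>V Vs. open_cover X V n Vs \<Longrightarrow> es_at n V Vs"
    and n: "1 \<le> n"
    and c: "open_cover X U (Suc n) Us"
  shows "es_at (Suc n) U Us"
  unfolding es_at_def
proof
  fix s assume s: "s \<in> DO (Suc n) Us"
  have OU: "openin X U" using OU[OF c] .
  have OUi: "\<And>i. i < Suc n \<Longrightarrow> openin X (Us i)" using Oi[OF c] .
  have SUi: "\<And>i. i < Suc n \<Longrightarrow> Us i \<subseteq> U" using Si[OF c] .
  have cv: "(\<Union>i<Suc n. Us i) = U" using c unfolding open_cover_def by blast
  define V where "V = (\<Union>i<n. Us i)"
  have Oi': "\<And>i. i < n \<Longrightarrow> openin X (Us i)" using OUi by simp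
  have OV: "openin X V" unfolding V_def using sps_UN[OF sps_O Oi' n] .
  have On: "openin X (Us n)" using OUi by simp
  have UiV: "\<And>i. i < n \<Longrightarrow> Us i \<subseteq> V" unfolding V_def by auto
  have UVW: "U = V \<union> Us n" using cv unfolding V_def by (simp add: lessThan_Suc Un_commute)
  have VU: "V \<subseteq> U" and UnU: "Us n \<subseteq> U" using UVW by auto
  have cV: "open_cover X V n Us" unfolding open_cover_def using OV Oi' V_def by blast
  have OVn: "openin X (V \<inter> Us n)" using OV On by simp
  have sD: "\<And>i j. i < Suc n \<Longrightarrow> j < Suc n \<Longrightarrow> fst s i \<in> Obj (FF (Us i)) \<and> snd s i j \<in> Arr (FF (Us i \<inter> Us j)) \<and>
      Dom (FF (Us i \<inter> Us j)) (snd s i j) = resO (Us i \<inter> Us j) (Us i) (fst s i) \<and>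
      Cod (FF (Us i \<inter> Us j)) (snd s i j) = resO (Us i \<inter> Us j) (Us j) (fst s j)"
    using dobjD[OF s] by blast
  have sO: "fst s i \<in> Obj (FF (Us i))" if "i < n" for i using dobjD(1)[OF s, of i i] that by simp
  have sA: "snd s i j \<in> Arr (FF (Us i \<inter> Us j))" if "i < n" "j < n" for i j using dobjD(2)[OF s, of i j] that by simp
  define sn where "sn = (restrict (fst s) {..<n}, \<lambda>i\<in>{..<n}. restrict (snd s i) {..<n})"
  have sn_fst: "\<And>i. i < n \<Longrightarrow> fst sn i = fst s i" unfolding sn_def by simp
  have sn_snd: "\<And>i j. i < n \<Longrightarrow> j < n \<Longrightarrow> snd sn i j = snd s i j" unfolding sn_def by simp
  have sn_DO: "sn \<in> DO n Us"
  proof -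
    have 1: "restrict (fst s) {..<n} \<in> PiE {..<n} (\<lambda>i. Obj (FF (Us i)))"
      using sO by (auto simp: Pi_def)
    have 2: "(\<lambda>i\<in>{..<n}. restrict (snd s i) {..<n}) \<in> PiE {..<n} (\<lambda>i. PiE {..<n} (\<lambda>j. Arr (FF (Us i \<inter> Us j))))"
      using sA by (auto simp: Pi_def PiE_iff)
    have 3: "\<forall>i<n. \<forall>j<n. Dom (FF (Us i \<inter> Us j)) ((\<lambda>i\<in>{..<n}. restrict (snd s i) {..<n}) i j) = resO (Us i \<inter> Us j) (Us i) (restrict (fst s) {..<n} i) \<and>
           Cod (FF (Us i \<inter> Us j)) ((\<lambda>i\<in>{..<n}. restrict (snd s i) {..<n}) i j) = resO (Us i \<inter> Us j) (Us j) (restrict (fst s) {..<n} j)"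
      using sD by simp
    have 4: "\<forall>i<n. \<forall>j<n. \<forall>k<n.
           Comp (FF (Us i \<inter> Us j \<inter> Us k))
             (resA (Us i \<inter> Us j \<inter> Us k) (Us j \<inter> Us k) ((\<lambda>i\<in>{..<n}. restrict (snd s i) {..<n}) j k))
             (resA (Us i \<inter> Us j \<inter> Us k) (Us i \<inter> Us j) ((\<lambda>i\<in>{..<n}. restrict (snd s i) {..<n}) i j))
           = resA (Us i \<inter> Us j \<inter> Us k) (Us i \<inter> Us k) ((\<lambda>i\<in>{..<n}. restrict (snd s i) {..<n}) i k)"
      using dobj_cocycle[OF s] by simp
    show ?thesis unfolding sn_def dobj_iff using 1 2 3 4 by blast
  qed
  obtain y g where y: "y \<in> Obj (FF V)"
    and g1: "\<forall>i<n. g i \<in> Arr (FF (Us i)) \<and> Dom (FF (Us i)) (g i) = resO (Us i) V y \<and> Cod (FF (Us i)) (g i) = fst sn i"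
    and g2: "\<forall>i<n. \<forall>j<n. Comp (FF (Us i \<inter> Us j)) (snd sn i j) (resA (Us i \<inter> Us j) (Us i) (g i)) = resA (Us i \<inter> Us j) (Us j) (g j)"
    using esD[OF esn[OF cV] sn_DO] by blast
  have gA: "\<And>i. i < n \<Longrightarrow> g i \<in> Arr (FF (Us i)) \<and> Dom (FF (Us i)) (g i) = resO (Us i) V y \<and> Cod (FF (Us i)) (g i) = fst s i"
    using g1 sn_fst by simp
  have gC: "\<And>i j. i < n \<Longrightarrow> j < n \<Longrightarrow> Comp (FF (Us i \<inter> Us j)) (snd s i j) (resA (Us i \<inter> Us j) (Us i) (g i)) = resA (Us i \<inter> Us j) (Us j) (g j)"
    using g2 sn_snd by simp
  define Vs where "Vs i = Us i \<inter> Us n" for i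
  have cVW: "open_cover X (V \<inter> Us n) n Vs"
    unfolding open_cover_def Vs_def using OVn Oi' On V_def by auto
  define x' where "x' = resO (V \<inter> Us n) V y"
  define y' where "y' = resO (V \<inter> Us n) (Us n) (fst s n)"
  have sn_n: "fst s n \<in> Obj (FF (Us n))" using dobjD(1)[OF s, of n n] by simp
  have x'O: "x' \<in> Obj (FF (V \<inter> Us n))" unfolding x'_def using OV On y by simp
  have y'O: "y' \<in> Obj (FF (V \<inter> Us n))" unfolding y'_def using OV On sn_n by simp
  define h where "h i = Comp (FF (Us i \<inter> Us n)) (snd s i n) (resA (Us i \<inter> Us n) (Us i) (g i))" for i
  have h1: "\<forall>i<n. h i \<in> Arr (FF (Vs i)) \<and> Dom (FF (Vs i)) (h i) = resO (Vs i) (V \<inter> Us n) x' \<and>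
      Cod (FF (Vs i)) (h i) = resO (Vs i) (V \<inter> Us n) y'"
  proof (intro allI impI)
    fix i assume i: "i < n"
    have ii: "i < Suc n" and nn: "n < Suc n" using i by auto
    note gi = gA[OF i] and phi = dobjD[OF s ii nn]
    show "h i \<in> Arr (FF (Vs i)) \<and> Dom (FF (Vs i)) (h i) = resO (Vs i) (V \<inter> Us n) x' \<and>
      Cod (FF (Vs i)) (h i) = resO (Vs i) (V \<inter> Us n) y'"
      unfolding h_def Vs_def x'_def y'_def using gi phi OUi[OF ii] On OV UiV[OF i] y sn_n by simp
  qed
  have h2: "\<forall>i<n. \<forall>j<n. resA (Vs i \<inter> Vs j) (Vs i) (h i) = resA (Vs i \<inter> Vs j) (Vs j) (h j)"
  proof (intro allI impI)
    fix i j assume i: "i < n" and j: "j < n"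
    have ii: "i < Suc n" and jj: "j < Suc n" and nn: "n < Suc n" using i j by auto
    have eqT: "Vs i \<inter> Vs j = Us i \<inter> Us j \<inter> Us n" unfolding Vs_def by blast
    let ?T = "Us i \<inter> Us j \<inter> Us n"
    have OT: "openin X ?T" and OI: "openin X (Us i)" and OJ: "openin X (Us j)" using OUi[OF ii] OUi[OF jj] On by auto
    note gi = gA[OF i] and gj = gA[OF j]
    note pin = dobjD[OF s ii nn] and pjn = dobjD[OF s jj nn] and pij = dobjD[OF s ii jj]
    have L: "resA ?T (Us i \<inter> Us n) (h i) = Comp (FF ?T) (resA ?T (Us i \<inter> Us n) (snd s i n)) (resA ?T (Us i) (g i))"
      unfolding h_def using gi pin OI On OT by simp
    have R: "resA ?T (Us j \<inter> Us n) (h j) = Comp (FF ?T) (resA ?T (Us j \<inter> Us n) (snd s j n)) (resA ?T (Us j) (g j))"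
      unfolding h_def using gj pjn OJ On OT by simp
    have gjT: "resA ?T (Us j) (g j) = Comp (FF ?T) (resA ?T (Us i \<inter> Us j) (snd s i j)) (resA ?T (Us i) (g i))"
    proof -
      have "resA ?T (Us j) (g j) = resA ?T (Us i \<inter> Us j) (resA (Us i \<inter> Us j) (Us j) (g j))"
        using gj OJ OI OT by simp
      also have "\<dots> = resA ?T (Us i \<inter> Us j) (Comp (FF (Us i \<inter> Us j)) (snd s i j) (resA (Us i \<inter> Us j) (Us i) (g i)))"
        using gC[OF i j] by simp
      also have "\<dots> = Comp (FF ?T) (resA ?T (Us i \<inter> Us j) (snd s i j)) (resA ?T (Us i) (g i))"
        using gi pij OI OJ OT by simp
      finally show ?thesis .
    qed
    have "resA ?T (Us j \<inter> Us n) (h j) = Comp (FF ?T) (resA ?T (Us j \<inter> Us n) (snd s j n))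
        (Comp (FF ?T) (resA ?T (Us i \<inter> Us j) (snd s i j)) (resA ?T (Us i) (g i)))" using R gjT by simp
    also have "\<dots> = Comp (FF ?T) (Comp (FF ?T) (resA ?T (Us j \<inter> Us n) (snd s j n)) (resA ?T (Us i \<inter> Us j) (snd s i j))) (resA ?T (Us i) (g i))"
      using gi pij pjn OI OJ On OT by (simp add: cat_assoc)
    also have "\<dots> = Comp (FF ?T) (resA ?T (Us i \<inter> Us n) (snd s i n)) (resA ?T (Us i) (g i))"
      using dobj_cocycle[OF s ii jj nn] by simp
    also have "\<dots> = resA ?T (Us i \<inter> Us n) (h i)" using L by simp
    finally show "resA (Vs i \<inter> Vs j) (Vs i) (h i) = resA (Vs i \<inter> Vs j) (Vs j) (h j)"
      unfolding eqT unfolding Vs_def by simp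
  qed
  obtain psi where psi: "psi \<in> Arr (FF (V \<inter> Us n))" "Dom (FF (V \<inter> Us n)) psi = x'" "Cod (FF (V \<inter> Us n)) psi = y'"
    and psir: "\<forall>i<n. resA (Vs i) (V \<inter> Us n) psi = h i"
    using hsD2[OF hsn[OF cVW] x'O y'O h1 h2] by blast
  define psi' where "psi' = ginv (FF (V \<inter> Us n)) psi"
  have pinv: "is_inverse (FF (V \<inter> Us n)) psi psi'" unfolding psi'_def using ginv[OF grpd[OF OVn] psi(1)] .
  have psi': "psi' \<in> Arr (FF (V \<inter> Us n))" "Dom (FF (V \<inter> Us n)) psi' = y'" "Cod (FF (V \<inter> Us n)) psi' = x'"
    "Comp (FF (V \<inter> Us n)) psi' psi = Ide (FF (V \<inter> Us n)) x'" "Comp (FF (V \<inter> Us n)) psi psi' = Ide (FF (V \<inter> Us n)) y'"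
    using inv_arr[OF pinv] inv_dom[OF pinv] inv_cod[OF pinv] inv_l[OF pinv] inv_r[OF pinv] psi by simp_all
  define Us2 where "Us2 i = (if i = 0 then V else Us n)" for i :: nat
  have c2: "open_cover X U 2 Us2"
  proof -
    have "(\<Union>i<2. Us2 i) = Us2 0 \<union> Us2 1" by (auto simp: numeral_2_eq_2 less_Suc_eq)
    thus ?thesis unfolding open_cover_def using OU OV On UVW by (auto simp: Us2_def all2)
  qed
  define z where "z = (\<lambda>i\<in>{..<2::nat}. if i = 0 then y else fst s n)"
  define Phi where "Phi = (\<lambda>i\<in>{..<2::nat}. \<lambda>j\<in>{..<2::nat}. if i = 0 then (if j = 0 then Ide (FF V) y else psi)
      else (if j = 0 then psi' else Ide (FF (Us n)) (fst s n)))"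
  have e1: "Us n \<inter> V = V \<inter> Us n" and e2: "V \<inter> Us n \<inter> V = V \<inter> Us n" and e3: "V \<inter> Us n \<inter> Us n = V \<inter> Us n" by blast+
  have x'd: "resO (V \<inter> Us n) V y = x'" and y'd: "resO (V \<inter> Us n) (Us n) (fst s n) = y'" using x'_def y'_def by simp_all
  have t: "(z, Phi) \<in> DO 2 Us2"
    unfolding dobj_iff
    apply (simp only: restrict_PiE_iff all2 ball2 z_def Phi_def)
    using y sn_n psi psi' x'O y'O OV On OVn
    apply (simp add: Us2_def e1 e2 e3 x'd y'd)
    done
  obtain a G where a: "a \<in> Obj (FF U)"
    and G1: "\<forall>i<2. G i \<in> Arr (FF (Us2 i)) \<and> Dom (FF (Us2 i)) (G i) = resO (Us2 i) U a \<and> Cod (FF (Us2 i)) (G i) = fst (z, Phi) i"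
    and G2: "\<forall>i<2. \<forall>j<2. Comp (FF (Us2 i \<inter> Us2 j)) (snd (z, Phi) i j) (resA (Us2 i \<inter> Us2 j) (Us2 i) (G i)) = resA (Us2 i \<inter> Us2 j) (Us2 j) (G j)"
    using esD[OF es2[OF c2] t] by blast
  have G0: "G 0 \<in> Arr (FF V)" "Dom (FF V) (G 0) = resO V U a" "Cod (FF V) (G 0) = y"
    using G1 by (simp_all add: all2 Us2_def z_def)
  have Gn: "G 1 \<in> Arr (FF (Us n))" "Dom (FF (Us n)) (G 1) = resO (Us n) U a" "Cod (FF (Us n)) (G 1) = fst s n"
    using G1 by (simp_all add: all2 Us2_def z_def)
  have Gc: "Comp (FF (V \<inter> Us n)) psi (resA (V \<inter> Us n) V (G 0)) = resA (V \<inter> Us n) (Us n) (G 1)"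
    using G2 by (simp add: all2 Us2_def Phi_def)
  define gg where "gg i = (if i < n then Comp (FF (Us i)) (g i) (resA (Us i) V (G 0)) else G 1)" for i
  have gg1: "\<forall>i<Suc n. gg i \<in> Arr (FF (Us i)) \<and> Dom (FF (Us i)) (gg i) = resO (Us i) U a \<and> Cod (FF (Us i)) (gg i) = fst s i"
  proof (intro allI impI)
    fix i assume i: "i < Suc n"
    show "gg i \<in> Arr (FF (Us i)) \<and> Dom (FF (Us i)) (gg i) = resO (Us i) U a \<and> Cod (FF (Us i)) (gg i) = fst s i"
    proof (cases "i < n")
      case True
      show ?thesis unfolding gg_def using True gA[OF True] G0 OUi[OF i] OV OU UiV[OF True] VU a by simp
    next
      case False
      hence "i = n" using i by simp
      thus ?thesis unfolding gg_def using Gn by simp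
    qed
  qed
  have caseB: "Comp (FF (Us i \<inter> Us n)) (snd s i n) (resA (Us i \<inter> Us n) (Us i) (gg i)) = resA (Us i \<inter> Us n) (Us n) (gg n)"
    if i: "i < n" for i
  proof -
    have ii: "i < Suc n" and nn: "n < Suc n" using i by auto
    let ?A = "Us i \<inter> Us n"
    have OA: "openin X ?A" and OI: "openin X (Us i)" using OUi[OF ii] On by auto
    note gi = gA[OF i] and pin = dobjD[OF s ii nn]
    have sub1: "?A \<subseteq> V \<inter> Us n" using UiV[OF i] by auto
    have "resA ?A (Us i) (gg i) = Comp (FF ?A) (resA ?A (Us i) (g i)) (resA ?A V (G 0))"
      unfolding gg_def using i gi G0 OI OV OA UiV[OF i] by simp
    hence "Comp (FF ?A) (snd s i n) (resA ?A (Us i) (gg i)) = Comp (FF ?A) (snd s i n) (Comp (FF ?A) (resA ?A (Us i) (g i)) (resA ?A V (G 0)))"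
      by simp
    also have "\<dots> = Comp (FF ?A) (h i) (resA ?A V (G 0))"
      unfolding h_def using gi G0 pin OI OV OA On y UiV[OF i] by (simp add: cat_assoc)
    also have "\<dots> = Comp (FF ?A) (resA ?A (V \<inter> Us n) psi) (resA ?A (V \<inter> Us n) (resA (V \<inter> Us n) V (G 0)))"
      using psir i G0 OV OA OVn sub1 unfolding Vs_def by simp
    also have "\<dots> = resA ?A (V \<inter> Us n) (Comp (FF (V \<inter> Us n)) psi (resA (V \<inter> Us n) V (G 0)))"
      using psi G0 OV OA OVn sub1 x'd by simp
    also have "\<dots> = resA ?A (Us n) (G 1)" using Gc Gn OA OVn On sub1 by simp
    finally show ?thesis unfolding gg_def by simp
  qed
  have caseA: "Comp (FF (Us i \<inter> Us j)) (snd s i j) (resA (Us i \<inter> Us j) (Us i) (gg i)) = resA (Us i \<inter> Us j) (Us j) (gg j)"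
    if i: "i < n" and j: "j < n" for i j
  proof -
    have ii: "i < Suc n" and jj: "j < Suc n" using i j by auto
    let ?A = "Us i \<inter> Us j"
    have OA: "openin X ?A" and OI: "openin X (Us i)" and OJ: "openin X (Us j)" using OUi[OF ii] OUi[OF jj] by auto
    note gi = gA[OF i] and gj = gA[OF j] and pij = dobjD[OF s ii jj]
    have "Comp (FF ?A) (snd s i j) (resA ?A (Us i) (gg i)) = Comp (FF ?A) (snd s i j) (Comp (FF ?A) (resA ?A (Us i) (g i)) (resA ?A V (G 0)))"
      unfolding gg_def using i gi G0 OI OV OA UiV[OF i] by simp
    also have "\<dots> = Comp (FF ?A) (Comp (FF ?A) (snd s i j) (resA ?A (Us i) (g i))) (resA ?A V (G 0))"
      using gi G0 pij OI OV OA y UiV[OF i] by (simp add: cat_assoc)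
    also have "\<dots> = Comp (FF ?A) (resA ?A (Us j) (g j)) (resA ?A V (G 0))" using gC[OF i j] by simp
    also have "\<dots> = resA ?A (Us j) (gg j)"
      unfolding gg_def using j gj G0 OJ OV OA UiV[OF j] by simp
    finally show ?thesis .
  qed
  have caseC: "Comp (FF (Us n \<inter> Us j)) (snd s n j) (resA (Us n \<inter> Us j) (Us n) (gg n)) = resA (Us n \<inter> Us j) (Us j) (gg j)"
    if j: "j < n" for j
  proof -
    have jj: "j < Suc n" and nn: "n < Suc n" using j by auto
    have eq: "Us n \<inter> Us j = Us j \<inter> Us n" by blast
    let ?A = "Us j \<inter> Us n"
    have OA: "openin X ?A" and OJ: "openin X (Us j)" using OUi[OF jj] On by auto
    have pnj: "snd s n j \<in> Arr (FF ?A)" "Dom (FF ?A) (snd s n j) = resO ?A (Us n) (fst s n)"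
      "Cod (FF ?A) (snd s n j) = resO ?A (Us j) (fst s j)"
      using dobjD[OF s nn jj] unfolding eq by simp_all
    note pjn = dobjD[OF s jj nn]
    have inv: "Comp (FF ?A) (snd s n j) (snd s j n) = Ide (FF ?A) (resO ?A (Us j) (fst s j))"
      using phi_inv[OF s jj nn OJ On] .
    have ggj: "gg j \<in> Arr (FF (Us j))" "Dom (FF (Us j)) (gg j) = resO (Us j) U a" "Cod (FF (Us j)) (gg j) = fst s j"
      using gg1 jj by auto
    have Q: "resA ?A (Us j) (gg j) \<in> Arr (FF ?A)" "Cod (FF ?A) (resA ?A (Us j) (gg j)) = resO ?A (Us j) (fst s j)"
      using ggj OA OJ by auto
    have "Comp (FF ?A) (snd s n j) (resA ?A (Us n) (gg n)) = Comp (FF ?A) (snd s n j) (Comp (FF ?A) (snd s j n) (resA ?A (Us j) (gg j)))"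
      using caseB[OF j] by simp
    also have "\<dots> = Comp (FF ?A) (Comp (FF ?A) (snd s n j) (snd s j n)) (resA ?A (Us j) (gg j))"
      using pnj pjn Q OA by (simp add: cat_assoc)
    also have "\<dots> = resA ?A (Us j) (gg j)" using inv Q OA by simp
    finally show ?thesis unfolding eq .
  qed
  have caseD: "Comp (FF (Us n \<inter> Us n)) (snd s n n) (resA (Us n \<inter> Us n) (Us n) (gg n)) = resA (Us n \<inter> Us n) (Us n) (gg n)"
  proof -
    have nn: "n < Suc n" by simp
    show ?thesis using phi_ii[OF s nn On] Gn On unfolding gg_def by simp
  qed
  have gg2: "\<forall>i<Suc n. \<forall>j<Suc n. Comp (FF (Us i \<inter> Us j)) (snd s i j) (resA (Us i \<inter> Us j) (Us i) (gg i)) = resA (Us i \<inter> Us j) (Us j) (gg j)"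
  proof (intro allI impI)
    fix i j assume i: "i < Suc n" and j: "j < Suc n"
    show "Comp (FF (Us i \<inter> Us j)) (snd s i j) (resA (Us i \<inter> Us j) (Us i) (gg i)) = resA (Us i \<inter> Us j) (Us j) (gg j)"
    proof (cases "i < n")
      case True
      show ?thesis
      proof (cases "j < n")
        case True2: True
        show ?thesis using caseA[OF True True2] .
      next
        case False
        hence "j = n" using j by simp
        thus ?thesis using caseB[OF True] by simp
      qed
    next
      case False
      hence ie: "i = n" using i by simp
      show ?thesis
      proof (cases "j < n")
        case True2: True
        show ?thesis using caseC[OF True2] ie by simp
      next
        case False
        hence "j = n" using j by simp
        thus ?thesis using caseD ie by simp
      qed
    qed
  qed
  show "\<exists>a\<in>Obj (FF U). \<exists>g.
     (\<forall>i<Suc n. g i \<in> Arr (FF (Us i)) \<and> Dom (FF (Us i)) (g i) = resO (Us i) U a \<and> Cod (FF (Us i)) (g i) = fst s i) \<and>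
     (\<forall>i<Suc n. \<forall>j<Suc n. Comp (FF (Us i \<inter> Us j)) (snd s i j) (resA (Us i \<inter> Us j) (Us i) (g i)) = resA (Us i \<inter> Us j) (Us j) (g j))"
    using a gg1 gg2 by blast
qed

end

context gp begin

lemma es_all: assumes es2: "\<And>V Vs. open_cover X V 2 Vs \<Longrightarrow> es_at 2 V Vs"
  and hs2: "\<And>V Vs. open_cover X V 2 Vs \<Longrightarrow> hs_at 2 V Vs"
  shows "n \<ge> 2 \<Longrightarrow> (\<forall>V Vs. open_cover X V n Vs \<longrightarrow> es_at n V Vs)"
proof (induction n)
  case 0 thus ?case by simp
next
  case (Suc n)
  show ?case
  proof (cases "n = 1")
    case True thus ?thesis using es2 by (simp add: numeral_2_eq_2)
  next
    case False
    hence n2: "n \<ge> 2" using Suc.prems by simp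
    have esn: "\<And>V Vs. open_cover X V n Vs \<Longrightarrow> es_at n V Vs" using Suc.IH n2 by blast
    have hsn: "\<And>V Vs. open_cover X V n Vs \<Longrightarrow> hs_at n V Vs" using hs_all[OF hs2 n2] by blast
    show ?thesis using es_step[OF hsn es2 esn] n2 by simp
  qed
qed

lemma st_all: assumes st2: "st_cond X FF resO resA 2" and n: "n \<ge> 2" shows "st_cond X FF resO resA n"
proof -
  have hs2: "\<And>V Vs. open_cover X V 2 Vs \<Longrightarrow> hs_at 2 V Vs" using st_hs_es st2 by blast
  have es2: "\<And>V Vs. open_cover X V 2 Vs \<Longrightarrow> es_at 2 V Vs" using st_hs_es st2 by blast
  show ?thesis
  proof (rule hs_es_st)
    fix U Us assume c: "open_cover X U n Us"
    show "hs_at n U Us \<and> es_at n U Us" using hs_all[OF hs2 n c] es_all[OF es2 hs2 n] c by blast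
  qed
qed

end

theorem lemma6p2:
  fixes X :: "'a topology"
    and FF :: "'a set \<Rightarrow> ('o, 'm) cat"
    and resO :: "'a set \<Rightarrow> 'a set \<Rightarrow> 'o \<Rightarrow> 'o"
    and resA :: "'a set \<Rightarrow> 'a set \<Rightarrow> 'm \<Rightarrow> 'm"
  assumes "grp_presheaf X FF resO resA"
  shows "(sh_cond X FF resO resA 2 \<longrightarrow> (\<forall>n\<ge>2. sh_cond X FF resO resA n)) \<and>
         (st_cond X FF resO resA 2 \<longrightarrow> (\<forall>n\<ge>2. st_cond X FF resO resA n))"
proof -
  interpret gp X FF resO resA by (rule gp.intro) (rule assms)
  show ?thesis using sh_all st_all by blast
qed


end
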